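(* Let $I\subset(0,\infty)$ be the set of Mina margins of all positive ABMN solutions. Then: (1) there is $\lambda\in(0,1]$ with $I=[\lambda,\lambda^{-1}]$; (2) for $(m_{-\infty},m_\infty,n_{-\infty},n_\infty)\in\mathbb{R}^4$, a positive ABMN solution with this boundary data exists if and only if $m_{-\infty}<m_\infty$, $n_\infty<n_{-\infty}$ and $\frac{n_{-\infty}-n_\infty}{m_\infty-m_{-\infty}}\in[\lambda,\lambda^{-1}]$; (3) $\lambda\le 0.999904$.
   Context: The ABMN system on $\mathbb{Z}$ is the following set of equations in real variables $a_i,b_i,m_i,n_i$ ($i\in\mathbb{Z}$), with $a_i,b_i\ge 0$ always assumed: for every $i\in\mathbb{Z}$, $(a_i+b_i)(m_i+a_i)=a_im_{i+1}+b_im_{i-1}$; $(a_i+b_i)(n_i+b_i)=a_in_{i+1}+b_in_{i-1}$; $(a_i+b_i)^2=b_i(m_{i+1}-m_{i-1})$; $(a_i+b_i)^2=a_i(n_{i-1}-n_{i+1})$. A solution is positive if $a_i>0$ and $b_i>0$ for all $i$. Its boundary data is $(m_{-\infty},m_\infty,n_{-\infty},n_\infty)$, the limits $\lim_{k\to\infty}m_{-k}$, $\lim_{k\to\infty}m_k$, $\lim_{k\to\infty}n_{-k}$, $\lim_{k\to\infty}n_k$; for positive solutions these exist and are real, with $m_{-\infty}<m_\infty$, $n_\infty<n_{-\infty}$. Its Mina margin is $\frac{n_{-\infty}-n_\infty}{m_\infty-m_{-\infty}}$. *)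

theory Defs
  imports "HOL-Analysis.Analysis"
begin

definition ABMN_solution ::
  "(int \<Rightarrow> real) \<Rightarrow> (int \<Rightarrow> real) \<Rightarrow> (int \<Rightarrow> real) \<Rightarrow> (int \<Rightarrow> real) \<Rightarrow> bool" where
  "ABMN_solution a b m n \<longleftrightarrow>
     (\<forall>i::int.
        a i \<ge> 0 \<and> b i \<ge> 0 \<and>
        (a i + b i) * (m i + a i) = a i * m (i + 1) + b i * m (i - 1) \<and>
        (a i + b i) * (n i + b i) = a i * n (i + 1) + b i * n (i - 1) \<and>
        (a i + b i)^2 = b i * (m (i + 1) - m (i - 1)) \<and>
        (a i + b i)^2 = a i * (n (i - 1) - n (i + 1)))"

definition positive_ABMN_solution ::
  "(int \<Rightarrow> real) \<Rightarrow> (int \<Rightarrow> real) \<Rightarrow> (int \<Rightarrow> real) \<Rightarrow> (int \<Rightarrow> real) \<Rightarrow> bool" where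
  "positive_ABMN_solution a b m n \<longleftrightarrow>
     ABMN_solution a b m n \<and> (\<forall>i. a i > 0 \<and> b i > 0)"

definition has_boundary_data ::
  "(int \<Rightarrow> real) \<Rightarrow> (int \<Rightarrow> real) \<Rightarrow> real \<Rightarrow> real \<Rightarrow> real \<Rightarrow> real \<Rightarrow> bool" where
  "has_boundary_data m n mL mR nL nR \<longleftrightarrow>
     (\<lambda>k::nat. m (- int k)) \<longlonglongrightarrow> mL \<and>
     (\<lambda>k::nat. m (int k)) \<longlonglongrightarrow> mR \<and>
     (\<lambda>k::nat. n (- int k)) \<longlonglongrightarrow> nL \<and>
     (\<lambda>k::nat. n (int k)) \<longlonglongrightarrow> nR"

definition mina_margin :: "real \<Rightarrow> real \<Rightarrow> real \<Rightarrow> real \<Rightarrow> real" where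
  "mina_margin mL mR nL nR = (nL - nR) / (mR - mL)"

definition mina_margins :: "real set" where
  "mina_margins = {mina_margin mL mR nL nR | mL mR nL nR.
      \<exists>a b m n. positive_ABMN_solution a b m n \<and> has_boundary_data m n mL mR nL nR}"

end

theory Submission
  imports Defs
begin


definition Fa :: "real \<Rightarrow> real \<Rightarrow> real" where
  "Fa a b = (- (2*a+b) + sqrt ((2*a+b)^2 + 8*(2*a+b)*(b^2/a))) / 4"
definition Fb :: "real \<Rightarrow> real \<Rightarrow> real" where
  "Fb a b = (b^2/a - Fa a b) / 2"
definition F :: "real \<times> real \<Rightarrow> real \<times> real" where
  "F p = (Fa (fst p) (snd p), Fb (fst p) (snd p))"

definition rel :: "real \<Rightarrow> real \<Rightarrow> real \<Rightarrow> real \<Rightarrow> bool" where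
  "rel a b a' b' \<longleftrightarrow> a'^2 = b' * (2*a+b) \<and> a' + 2*b' = b^2/a"

lemma Fa_eq:
  assumes "a > 0" "b > 0"
  shows "2 * (Fa a b)^2 + (2*a+b) * Fa a b = (2*a+b) * (b^2/a)"
proof -
  define cc where "cc = 2*a+b"
  define ss where "ss = b^2/a"
  have cc: "cc > 0" using assms by (simp add: cc_def)
  have ss: "ss > 0" using assms by (simp add: ss_def)
  have X: "cc^2 + 8*cc * ss \<ge> 0" using cc ss by simp
  have F: "Fa a b = (- cc + sqrt (cc^2 + 8*cc * ss))/4" by (simp add: Fa_def cc_def ss_def)
  have sq: "(sqrt (cc^2 + 8*cc * ss))^2 = cc^2 + 8*cc * ss" using X by simp
  define R where "R = sqrt (cc^2 + 8*cc * ss)"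
  have sqR: "R^2 = cc^2 + 8*cc * ss" using sq by (simp add: R_def)
  have "2*((R-cc)/4)^2 + cc*((R-cc)/4) = (R^2 - cc^2)/8" by (simp add: power2_eq_square field_simps)
  also have "\<dots> = cc * ss" using sqR by simp
  finally show ?thesis unfolding F R_def[symmetric] cc_def[symmetric] ss_def[symmetric] by simp
qed

lemma Fa_pos:
  assumes "a > 0" "b > 0"
  shows "Fa a b > 0"
proof -
  define cc where "cc = 2*a+b"
  define ss where "ss = b^2/a"
  have cc: "cc > 0" using assms by (simp add: cc_def)
  have ss: "ss > 0" using assms by (simp add: ss_def)
  have "sqrt (cc^2) < sqrt (cc^2 + 8*cc * ss)" using cc ss by (intro real_sqrt_less_mono) simp
  then have "cc < sqrt (cc^2 + 8*cc * ss)" using cc by simp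
  then show ?thesis by (simp add: Fa_def cc_def[symmetric] ss_def[symmetric])
qed

lemma Fa_lt_s:
  assumes "a > 0" "b > 0"
  shows "Fa a b < b^2/a"
proof -
  have e: "2 * (Fa a b)^2 = (2*a+b) * (b^2/a - Fa a b)" using Fa_eq[OF assms] by (simp add: algebra_simps)
  have "2 * (Fa a b)^2 > 0" using Fa_pos[OF assms] by simp
  then have "(2*a+b) * (b^2/a - Fa a b) > 0" using e by simp
  then show ?thesis using assms by (simp add: zero_less_mult_iff)
qed

lemma Fb_pos: assumes "a > 0" "b > 0" shows "Fb a b > 0"
  using Fa_lt_s[OF assms] by (simp add: Fb_def)

lemma rel_F:
  assumes "a > 0" "b > 0"
  shows "rel a b (Fa a b) (Fb a b)"
proof -
  have "(Fa a b)^2 = Fb a b * (2*a+b)"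
    using Fa_eq[OF assms] unfolding Fb_def by (simp add: algebra_simps)
  moreover have "Fa a b + 2 * Fb a b = b^2/a" by (simp add: Fb_def field_simps)
  ultimately show ?thesis unfolding rel_def by simp
qed

lemma rel_unique:
  assumes "a > 0" "b > 0" "a' > 0" "b' > 0" "rel a b a' b'"
  shows "a' = Fa a b \<and> b' = Fb a b"
proof -
  define cc where "cc = 2*a+b"
  define ss where "ss = b^2/a"
  have cc: "cc > 0" using assms by (simp add: cc_def)
  from assms(5) have r1: "a'^2 = b'*cc" and r2: "a' + 2*b' = ss" by (auto simp: rel_def cc_def ss_def)
  have "2*a'^2 + cc*a' = cc*(a'+2*b')" using r1 by (simp add: algebra_simps)
  then have e1: "2*a'^2 + cc*a' = cc * ss" using r2 by simp
  have e2: "2*(Fa a b)^2 + cc*Fa a b = cc * ss" using Fa_eq[OF assms(1,2)] by (simp add: cc_def ss_def)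
  have "(a' - Fa a b) * (2*(a' + Fa a b) + cc) = 0"
    using e1 e2 by (simp add: algebra_simps power2_eq_square)
  moreover have "2*(a' + Fa a b) + cc > 0" using cc assms(3) Fa_pos[OF assms(1,2)] by simp
  ultimately have "a' = Fa a b" by simp
  then show ?thesis using r2 by (simp add: Fb_def ss_def)
qed

lemma rel_swap:
  assumes "a > 0" "b > 0" "a' > 0" "b' > 0"
  shows "rel b' a' b a \<longleftrightarrow> rel a b a' b'"
  using assms unfolding rel_def by (auto simp: field_simps)


definition sw :: "real \<times> real \<Rightarrow> real \<times> real" where "sw p = (snd p, fst p)"
definition pos :: "real \<times> real \<Rightarrow> bool" where "pos p \<longleftrightarrow> fst p > 0 \<and> snd p > 0"
definition relp :: "real \<times> real \<Rightarrow> real \<times> real \<Rightarrow> bool" where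
  "relp p q \<longleftrightarrow> rel (fst p) (snd p) (fst q) (snd q)"
definition orb :: "real \<times> real \<Rightarrow> int \<Rightarrow> real \<times> real" where
  "orb p i = (if 0 \<le> i then (F ^^ nat i) p else sw ((F ^^ nat (-i)) (sw p)))"
definition sc :: "real \<Rightarrow> real \<times> real \<Rightarrow> real \<times> real" where "sc t p = (t * fst p, t * snd p)"

lemma sw_sw[simp]: "sw (sw p) = p" by (simp add: sw_def)
lemma pos_sw[simp]: "pos (sw p) = pos p" by (auto simp: sw_def pos_def)
lemma fst_sw[simp]: "fst (sw p) = snd p" and snd_sw[simp]: "snd (sw p) = fst p" by (simp_all add: sw_def)

lemma pos_F: "pos p \<Longrightarrow> pos (F p)"
  by (simp add: pos_def F_def Fa_pos Fb_pos)
lemma relp_F: "pos p \<Longrightarrow> relp p (F p)"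
  by (simp add: pos_def F_def relp_def rel_F)
lemma pos_Fn: "pos p \<Longrightarrow> pos ((F ^^ k) p)"
  by (induction k) (auto intro: pos_F)
lemma relp_unique: "pos p \<Longrightarrow> pos q \<Longrightarrow> relp p q \<Longrightarrow> q = F p"
  using rel_unique by (auto simp: pos_def relp_def F_def prod_eq_iff)
lemma relp_sw: "pos p \<Longrightarrow> pos q \<Longrightarrow> relp (sw q) (sw p) \<longleftrightarrow> relp p q"
  using rel_swap by (simp add: pos_def relp_def)

lemma orb_0[simp]: "orb p 0 = p" by (simp add: orb_def)

lemma orb_pos: "pos p \<Longrightarrow> pos (orb p i)"
  by (simp add: orb_def pos_Fn)

lemma orb_rel: assumes "pos p" shows "relp (orb p i) (orb p (i+1))"
proof (cases "0 \<le> i")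
  case True
  then have "nat (i+1) = Suc (nat i)" by simp
  then show ?thesis using True assms by (simp add: orb_def relp_F pos_Fn)
next
  case False
  define k where "k = nat (-i - 1)"
  have k: "i = - int k - 1" using False by (simp add: k_def)
  let ?q = "(F ^^ k) (sw p)"
  have o1: "orb p i = sw (F ?q)" using k by (simp add: orb_def nat_add_distrib)
  have ik: "i + 1 = - int k" using k by simp
  have o2: "orb p (i+1) = sw ?q" unfolding ik orb_def by (cases "k = 0") auto
  have pq: "pos ?q" using assms by (simp add: pos_Fn)
  show ?thesis unfolding o1 o2 using relp_sw[OF pq pos_F[OF pq]] relp_F[OF pq] by simp
qed

lemma seq_unique:
  assumes "\<And>i. pos (x i)" "\<And>i. relp (x i) (x (i+1))"
  shows "x i = orb (x 0) i"
proof -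
  have fw: "x (int k) = (F ^^ k) (x 0)" for k
  proof (induction k)
    case (Suc k)
    have "x (int k + 1) = F (x (int k))" using relp_unique[OF assms(1) assms(1) assms(2)] by simp
    then have "x (int (Suc k)) = F (x (int k))" by (simp add: add.commute)
    then show ?case using Suc by simp
  qed simp
  have bw: "sw (x (- int k)) = (F ^^ k) (sw (x 0))" for k
  proof (induction k)
    case (Suc k)
    have r: "relp (x (- int (Suc k))) (x (- int k))" using assms(2)[of "- int (Suc k)"] by simp
    have "relp (sw (x (- int k))) (sw (x (- int (Suc k))))"
      using relp_sw[OF assms(1) assms(1)] r by simp
    then have "sw (x (- int (Suc k))) = F (sw (x (- int k)))"
      using relp_unique[OF pos_sw[THEN iffD2, OF assms(1)] pos_sw[THEN iffD2, OF assms(1)]] by simp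
    then show ?case using Suc by simp
  qed simp
  show ?thesis
  proof (cases "0 \<le> i")
    case True then show ?thesis using fw[of "nat i"] by (simp add: orb_def)
  next
    case False
    then have "i = - int (nat (-i))" by simp
    then have "x i = sw ((F ^^ nat (-i)) (sw (x 0)))" using bw[of "nat (-i)"] by (metis sw_sw)
    then show ?thesis using False by (simp add: orb_def)
  qed
qed

lemma orb_shift: assumes "pos p" shows "orb p (j + i) = orb (orb p j) i"
proof -
  have "(\<lambda>i. orb p (j+i)) i = orb ((\<lambda>i. orb p (j+i)) 0) i"
    by (rule seq_unique) (use assms orb_pos orb_rel[of p "j + _"] in \<open>auto simp: add.assoc\<close>)
  then show ?thesis by simp
qed

lemma pos_sc: "t > 0 \<Longrightarrow> pos p \<Longrightarrow> pos (sc t p)" by (simp add: pos_def sc_def)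
lemma relp_sc: assumes "t > 0" "pos p" "relp p q" shows "relp (sc t p) (sc t q)"
proof -
  obtain pa pb qa qb where P: "p = (pa,pb)" "q = (qa,qb)" by (cases p, cases q)
  have h: "qa^2 = qb*(2*pa+pb)" "qa + 2*qb = pb^2/pa" "pa > 0"
    using assms(2,3) P by (auto simp: relp_def rel_def pos_def)
  have "(t*qa)^2 = t^2*(qb*(2*pa+pb))" by (simp add: power_mult_distrib h(1))
  also have "\<dots> = (t*qb)*(2*(t*pa)+t*pb)" by (simp add: power2_eq_square algebra_simps)
  finally have 1: "(t*qa)^2 = (t*qb)*(2*(t*pa)+t*pb)" .
  have "t*qa + 2*(t*qb) = t*(qa + 2*qb)" by (simp add: algebra_simps)
  also have "\<dots> = t*(pb^2/pa)" using h(2) by simp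
  also have "\<dots> = (t*pb)^2/(t*pa)" using h(3) assms(1) by (simp add: power2_eq_square field_simps)
  finally show ?thesis using 1 P by (simp add: relp_def rel_def sc_def)
qed

lemma orb_sc: assumes "t > 0" "pos p" shows "orb (sc t p) i = sc t (orb p i)"
proof -
  have "(\<lambda>i. sc t (orb p i)) i = orb ((\<lambda>i. sc t (orb p i)) 0) i"
    by (rule seq_unique) (use assms orb_pos orb_rel pos_sc relp_sc in auto)
  then show ?thesis by simp
qed


lemma loc_m:
  fixes a b m mp mm :: real
  assumes "a > 0" "b > 0" "(a+b)*(m+a) = a*mp + b*mm" "(a+b)^2 = b*(mp - mm)"
  shows "mp - m = 2*a+b \<and> m - mm = a^2/b"
proof -
  have "(a+b)*(mp - m) = (a+b)*(2*a+b)"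
    using assms(3,4) by (simp add: power2_eq_square algebra_simps)
  then have 1: "mp - m = 2*a+b" using assms(1,2) by simp
  have "b*(m - mm) = a^2" using assms(4) 1 by (simp add: power2_eq_square algebra_simps)
  then show ?thesis using 1 assms(2) by (simp add: field_simps)
qed

lemma loc_n:
  fixes a b n np nm :: real
  assumes "a > 0" "b > 0" "(a+b)*(n+b) = a*np + b*nm" "(a+b)^2 = a*(nm - np)"
  shows "n - np = b^2/a \<and> nm - n = a+2*b"
proof -
  have "(a+b)*(nm - n) = (a+b)*(a+2*b)"
    using assms(3,4) by (simp add: power2_eq_square algebra_simps)
  then have 1: "nm - n = a+2*b" using assms(1,2) by simp
  have "a*(n - np) = b^2" using assms(4) 1 by (simp add: power2_eq_square algebra_simps)
  then show ?thesis using 1 assms(1) by (simp add: field_simps)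
qed

lemma loc_m_conv:
  fixes a b m mp mm :: real
  assumes "a > 0" "b > 0" "mp - m = 2*a+b" "m - mm = a^2/b"
  shows "(a+b)*(m+a) = a*mp + b*mm \<and> (a+b)^2 = b*(mp - mm)"
proof -
  have mm: "mm = m - a^2/b" using assms(4) by simp
  have mp: "mp = m + 2*a+b" using assms(3) by simp
  show ?thesis unfolding mm mp using assms(2) by (simp add: power2_eq_square field_simps)
qed

lemma loc_n_conv:
  fixes a b n np nm :: real
  assumes "a > 0" "b > 0" "n - np = b^2/a" "nm - n = a+2*b"
  shows "(a+b)*(n+b) = a*np + b*nm \<and> (a+b)^2 = a*(nm - np)"
proof -
  have np: "np = n - b^2/a" using assms(3) by simp
  have nm: "nm = n + a+2*b" using assms(4) by simp
  show ?thesis unfolding np nm using assms(1) by (simp add: power2_eq_square field_simps)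
qed

lemma abmn_to_rel:
  assumes "positive_ABMN_solution a b m n"
  shows "\<And>i. pos (a i, b i)" "\<And>i. relp (a i, b i) (a (i+1), b (i+1))"
        "\<And>i. m (i+1) - m i = 2 * a i + b i" "\<And>i. n i - n (i+1) = (b i)^2 / a i"
proof -
  have A: "ABMN_solution a b m n" and ps: "\<And>i. a i > 0 \<and> b i > 0"
    using assms unfolding positive_ABMN_solution_def by auto
  have S0: "a i \<ge> 0 \<and> b i \<ge> 0 \<and>
        (a i + b i) * (m i + a i) = a i * m (i + 1) + b i * m (i - 1) \<and>
        (a i + b i) * (n i + b i) = a i * n (i + 1) + b i * n (i - 1) \<and>
        (a i + b i)^2 = b i * (m (i + 1) - m (i - 1)) \<and>
        (a i + b i)^2 = a i * (n (i - 1) - n (i + 1))" for i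
    using spec[OF A[unfolded ABMN_solution_def], of i] .
  have S: "a i > 0 \<and> b i > 0 \<and>
        (a i + b i) * (m i + a i) = a i * m (i + 1) + b i * m (i - 1) \<and>
        (a i + b i) * (n i + b i) = a i * n (i + 1) + b i * n (i - 1) \<and>
        (a i + b i)^2 = b i * (m (i + 1) - m (i - 1)) \<and>
        (a i + b i)^2 = a i * (n (i - 1) - n (i + 1))" for i
    using S0[of i] ps[of i] by (elim conjE) (intro conjI; assumption)
  show P: "pos (a i, b i)" for i using S by (simp add: pos_def)
  have M: "m (i+1) - m i = 2*a i + b i \<and> m i - m (i - 1) = (a i)^2/b i" for i
    using S[of i] by (intro loc_m) auto
  have N: "n i - n (i+1) = (b i)^2/a i \<and> n (i - 1) - n i = a i + 2*b i" for i
    using S[of i] by (intro loc_n) auto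
  show "m (i+1) - m i = 2 * a i + b i" for i using M by simp
  show "n i - n (i+1) = (b i)^2 / a i" for i using N by simp
  show "relp (a i, b i) (a (i+1), b (i+1))" for i
  proof -
    have 1: "(a (i+1))^2 / b (i+1) = 2 * a i + b i" using M[of i] M[of "i+1"] by simp
    have 2: "a (i+1) + 2 * b (i+1) = (b i)^2 / a i" using N[of i] N[of "i+1"] by simp
    have "(a (i+1))^2 = b (i+1) * (2 * a i + b i)" using 1 S[of "i+1"] by (simp add: field_simps)
    then show ?thesis using 2 by (simp add: relp_def rel_def)
  qed
qed

lemma rel_to_abmn:
  assumes "\<And>i. pos (a i, b i)" "\<And>i. relp (a i, b i) (a (i+1), b (i+1))"
        "\<And>i. m (i+1) - m i = 2 * a i + b i" "\<And>i. n i - n (i+1) = (b i)^2 / a i"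
  shows "positive_ABMN_solution a b m n"
proof -
  have ab: "a i > 0" "b i > 0" for i using assms(1)[of i] by (auto simp: pos_def)
  have R: "(a (i+1))^2 = b (i+1) * (2*a i + b i)" "a (i+1) + 2*b (i+1) = (b i)^2 / a i" for i
    using assms(2)[of i] by (auto simp: relp_def rel_def)
  have Mm: "m i - m (i - 1) = (a i)^2 / b i" for i
    using assms(3)[of "i - 1"] R(1)[of "i - 1"] ab[of i] by (simp add: field_simps)
  have Nm: "n (i - 1) - n i = a i + 2 * b i" for i
    using assms(4)[of "i - 1"] R(2)[of "i - 1"] by simp
  show ?thesis unfolding positive_ABMN_solution_def ABMN_solution_def
  proof (intro conjI allI)
    fix i
    show "a i \<ge> 0" "b i \<ge> 0" using ab[of i] by auto
    show "a i > 0" "b i > 0" using ab by auto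
    from loc_m_conv[OF ab(1)[of i] ab(2)[of i] assms(3)[of i] Mm[of i]]
    show "(a i + b i) * (m i + a i) = a i * m (i + 1) + b i * m (i - 1)"
         "(a i + b i)^2 = b i * (m (i + 1) - m (i - 1))" by auto
    from loc_n_conv[OF ab(1)[of i] ab(2)[of i] assms(4)[of i] Nm[of i]]
    show "(a i + b i) * (n i + b i) = a i * n (i + 1) + b i * n (i - 1)"
         "(a i + b i)^2 = a i * (n (i - 1) - n (i + 1))" by auto
  qed
qed


lemma int_has_sum_split:
  fixes f :: "int \<Rightarrow> real"
  assumes nn: "\<And>i. f i \<ge> 0"
    and s1: "(\<lambda>k. f (int k)) sums S1" and s2: "(\<lambda>k. f (- int k - 1)) sums S2"
  shows "(f has_sum (S1 + S2)) UNIV"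
proof -
  have h1: "((\<lambda>k. f (int k)) has_sum S1) UNIV" using s1 nn by (intro sums_nonneg_imp_has_sum) auto
  have h2: "((\<lambda>k. f (- int k - 1)) has_sum S2) UNIV" using s2 nn by (intro sums_nonneg_imp_has_sum) auto
  have inj1: "inj (int :: nat \<Rightarrow> int)" by (simp add: inj_on_def)
  have inj2: "inj (\<lambda>k::nat. - int k - 1)" by (simp add: inj_on_def)
  have r1: "range (int :: nat \<Rightarrow> int) = {i. 0 \<le> i}"
    by (auto simp: image_iff) (metis nonneg_int_cases)
  have r2: "range (\<lambda>k::nat. - int k - 1) = {i. i < 0}"
  proof (auto simp: image_iff)
    fix i :: int assume "i < 0"
    then show "\<exists>k. i = - int k - 1" by (intro exI[of _ "nat (- i - 1)"]) simp
  qed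
  have g1: "(f has_sum S1) {i. 0 \<le> i}"
    using has_sum_reindex[OF inj1, of f S1] h1 r1 by (simp add: o_def)
  have g2: "(f has_sum S2) {i. i < 0}"
    using has_sum_reindex[OF inj2, of f S2] h2 r2 by (simp add: o_def)
  have "(f has_sum (S1 + S2)) ({i. 0 \<le> i} \<union> {i. i < 0})"
    by (rule has_sum_Un_disjoint[OF g1 g2]) auto
  moreover have "{i::int. 0 \<le> i} \<union> {i. i < 0} = UNIV" by auto
  ultimately show ?thesis by simp
qed

lemma margin_eq:
  assumes sol: "positive_ABMN_solution a b m n" and bd: "has_boundary_data m n mL mR nL nR"
  shows "(a has_sum (infsum a UNIV)) UNIV" "(b has_sum (infsum b UNIV)) UNIV"
        "mR - mL = 2 * infsum a UNIV + infsum b UNIV"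
        "nL - nR = infsum a UNIV + 2 * infsum b UNIV"
proof -
  note S = abmn_to_rel[OF sol]
  have ab: "a i > 0" "b i > 0" for i using S(1)[of i] by (auto simp: pos_def)
  define c where "c i = 2 * a i + b i" for i
  define d where "d i = (b i)^2 / a i" for i
  have c_nn: "c i \<ge> 0" for i using ab[of i] by (simp add: c_def)
  have d_nn: "d i \<ge> 0" for i using ab[of i] by (simp add: d_def)
  from bd have L1: "(\<lambda>k. m (- int k)) \<longlonglongrightarrow> mL" and L2: "(\<lambda>k. m (int k)) \<longlonglongrightarrow> mR"
    and L3: "(\<lambda>k. n (- int k)) \<longlonglongrightarrow> nL" and L4: "(\<lambda>k. n (int k)) \<longlonglongrightarrow> nR"
    by (auto simp: has_boundary_data_def)
  have t1: "m (int k) - m 0 = (\<Sum>j<k. c (int j))" for k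
  proof (induction k)
    case (Suc k) then show ?case using S(3)[of "int k"] by (simp add: c_def algebra_simps)
  qed simp
  have t2: "m 0 - m (- int k) = (\<Sum>j<k. c (- int j - 1))" for k
  proof (induction k)
    case (Suc k)
    have e: "- int (Suc k) = - int k - 1" by simp
    show ?case unfolding e sum.lessThan_Suc using Suc S(3)[of "- int k - 1"] by (simp add: c_def algebra_simps)
  qed simp
  have t3: "n 0 - n (int k) = (\<Sum>j<k. d (int j))" for k
  proof (induction k)
    case (Suc k) then show ?case using S(4)[of "int k"] by (simp add: d_def algebra_simps)
  qed simp
  have t4: "n (- int k) - n 0 = (\<Sum>j<k. d (- int j - 1))" for k
  proof (induction k)
    case (Suc k)
    have e: "- int (Suc k) = - int k - 1" by simp
    show ?case unfolding e sum.lessThan_Suc using Suc S(4)[of "- int k - 1"] by (simp add: d_def algebra_simps)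
  qed simp
  have s1: "(\<lambda>k. c (int k)) sums (mR - m 0)"
    unfolding sums_def using tendsto_diff[OF L2 tendsto_const[of "m 0"]] t1 by simp
  have s2: "(\<lambda>k. c (- int k - 1)) sums (m 0 - mL)"
    unfolding sums_def using tendsto_diff[OF tendsto_const[of "m 0"] L1] t2 by simp
  have s3: "(\<lambda>k. d (int k)) sums (n 0 - nR)"
    unfolding sums_def using tendsto_diff[OF tendsto_const[of "n 0"] L4] t3 by simp
  have s4: "(\<lambda>k. d (- int k - 1)) sums (nL - n 0)"
    unfolding sums_def using tendsto_diff[OF L3 tendsto_const[of "n 0"]] t4 by simp
  have hc: "(c has_sum (mR - mL)) UNIV"
    using int_has_sum_split[OF c_nn s1 s2] by simp
  have hd: "(d has_sum (nL - nR)) UNIV"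
    using int_has_sum_split[OF d_nn s3 s4] by simp
  have sa: "a summable_on UNIV"
    by (rule summable_on_comparison_test[of c]) (use hc ab c_def in \<open>auto simp: has_sum_iff intro: less_imp_le add_nonneg_nonneg\<close>)
  have sb: "b summable_on UNIV"
    by (rule summable_on_comparison_test[of c]) (use hc ab c_def in \<open>auto simp: has_sum_iff intro: less_imp_le add_nonneg_nonneg\<close>)
  show ha: "(a has_sum (infsum a UNIV)) UNIV" using sa by simp
  show hb: "(b has_sum (infsum b UNIV)) UNIV" using sb by simp
  have "(c has_sum (2 * infsum a UNIV + infsum b UNIV)) UNIV"
    unfolding c_def by (intro has_sum_add has_sum_cmult_right ha hb)
  then show "mR - mL = 2 * infsum a UNIV + infsum b UNIV" using hc has_sum_unique by blast
  have dd: "d i = a (i+1) + 2 * b (i+1)" for i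
    using S(2)[of i] by (simp add: d_def relp_def rel_def)
  have "((\<lambda>i. a i + 2 * b i) has_sum (infsum a UNIV + 2 * infsum b UNIV)) UNIV"
    by (intro has_sum_add has_sum_cmult_right ha hb)
  then have "((\<lambda>i. a (i+1) + 2 * b (i+1)) has_sum (infsum a UNIV + 2 * infsum b UNIV)) UNIV"
    by (subst has_sum_reindex_bij_witness[where i="\<lambda>i. i - 1" and j="\<lambda>i. i + 1" and T=UNIV and h="\<lambda>i. a i + 2 * b i"]) auto
  moreover have "d = (\<lambda>i. a (i+1) + 2 * b (i+1))" using dd by (intro ext) simp
  ultimately have "(d has_sum (infsum a UNIV + 2 * infsum b UNIV)) UNIV" by simp
  then show "nL - nR = infsum a UNIV + 2 * infsum b UNIV" using hd has_sum_unique by blast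
qed


lemma orb_nat: "orb p (int k) = (F ^^ k) p" by (simp add: orb_def)
lemma orb_neg: "orb p (- int k) = sw ((F ^^ k) (sw p))" by (cases "k = 0") (auto simp: orb_def)
lemma orb_neg1: "orb p (- int k - 1) = sw ((F ^^ Suc k) (sw p))"
proof -
  have e: "- int k - 1 = - int (Suc k)" by simp
  show ?thesis unfolding e orb_neg ..
qed

lemma construct:
  assumes p: "pos p"
    and hF1: "summable (\<lambda>k. fst ((F ^^ k) p))" and hF2: "summable (\<lambda>k. snd ((F ^^ k) p))"
    and hB1: "summable (\<lambda>k. fst ((F ^^ k) (sw p)))" and hB2: "summable (\<lambda>k. snd ((F ^^ k) (sw p)))"
  shows "\<exists>m n mL mR nL nR. positive_ABMN_solution (\<lambda>i. fst (orb p i)) (\<lambda>i. snd (orb p i)) m n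
            \<and> has_boundary_data m n mL mR nL nR"
proof -
  define a where "a i = fst (orb p i)" for i
  define b where "b i = snd (orb p i)" for i
  define c where "c i = 2 * a i + b i" for i
  define d where "d i = (b i)^2 / a i" for i
  have P: "pos (a i, b i)" for i using orb_pos[OF p, of i] by (simp add: a_def b_def)
  have R: "relp (a i, b i) (a (i+1), b (i+1))" for i using orb_rel[OF p, of i] by (simp add: a_def b_def)
  have dd: "d i = a (i+1) + 2 * b (i+1)" for i using R[of i] by (simp add: d_def relp_def rel_def)
  define m where "m i = (if 0 \<le> i then (\<Sum>j<nat i. c (int j)) else - (\<Sum>j<nat (-i). c (- int j - 1)))" for i
  define n where "n i = (if 0 \<le> i then - (\<Sum>j<nat i. d (int j)) else (\<Sum>j<nat (-i). d (- int j - 1)))" for i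
  have mi: "m (i+1) - m i = c i" for i
  proof (cases "0 \<le> i")
    case True
    then have "nat (i+1) = Suc (nat i)" by simp
    then show ?thesis using True by (simp add: m_def)
  next
    case False
    define k where "k = nat (-i - 1)"
    have i: "i = - int k - 1" using False by (simp add: k_def)
    have e1: "nat (-i) = Suc k" using i by simp
    show ?thesis
    proof (cases "k = 0")
      case True then show ?thesis using i by (simp add: m_def)
    next
      case False
      then have e2: "nat (-(i+1)) = k" using i by simp
      have "\<not> 0 \<le> i + 1" using i False by simp
      then show ?thesis using e1 e2 i by (simp add: m_def)
    qed
  qed
  have ni: "n i - n (i+1) = d i" for i
  proof (cases "0 \<le> i")
    case True
    then have "nat (i+1) = Suc (nat i)" by simp
    then show ?thesis using True by (simp add: n_def)
  next
    case False
    define k where "k = nat (-i - 1)"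
    have i: "i = - int k - 1" using False by (simp add: k_def)
    have e1: "nat (-i) = Suc k" using i by simp
    show ?thesis
    proof (cases "k = 0")
      case True then show ?thesis using i by (simp add: n_def)
    next
      case False
      then have e2: "nat (-(i+1)) = k" using i by simp
      have "\<not> 0 \<le> i + 1" using i False by simp
      then show ?thesis using e1 e2 i by (simp add: n_def)
    qed
  qed
  have sol: "positive_ABMN_solution a b m n"
    by (rule rel_to_abmn[where a=a and b=b, OF P R]) (use mi ni c_def d_def in auto)
  have cF: "summable (\<lambda>k. c (int k))"
    unfolding c_def a_def b_def orb_nat by (intro summable_add summable_mult hF1 hF2)
  have hB1': "summable (\<lambda>k. fst ((F ^^ Suc k) (sw p)))" using hB1 summable_Suc_iff[of "\<lambda>k. fst ((F ^^ k) (sw p))"] by simp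
  have hB2': "summable (\<lambda>k. snd ((F ^^ Suc k) (sw p)))" using hB2 summable_Suc_iff[of "\<lambda>k. snd ((F ^^ k) (sw p))"] by simp
  have hF1': "summable (\<lambda>k. fst ((F ^^ Suc k) p))" using hF1 summable_Suc_iff[of "\<lambda>k. fst ((F ^^ k) p)"] by simp
  have hF2': "summable (\<lambda>k. snd ((F ^^ Suc k) p))" using hF2 summable_Suc_iff[of "\<lambda>k. snd ((F ^^ k) p)"] by simp
  have cB: "summable (\<lambda>k. c (- int k - 1))"
    unfolding c_def a_def b_def orb_neg1 fst_sw snd_sw by (intro summable_add summable_mult hB1' hB2')
  have dF: "summable (\<lambda>k. d (int k))"
  proof -
    have "d (int k) = fst ((F ^^ Suc k) p) + 2 * snd ((F ^^ Suc k) p)" for k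
    proof -
      have "int k + 1 = int (Suc k)" by simp
      then show ?thesis using dd[of "int k"] unfolding a_def b_def by (simp only: orb_nat)
    qed
    then show ?thesis by (simp only:) (intro summable_add summable_mult hF1' hF2')
  qed
  have dB: "summable (\<lambda>k. d (- int k - 1))"
  proof -
    have "d (- int k - 1) = snd ((F ^^ k) (sw p)) + 2 * fst ((F ^^ k) (sw p))" for k
      using dd[of "- int k - 1"] by (simp add: a_def b_def orb_neg sw_def)
    then show ?thesis by (simp only:) (intro summable_add summable_mult hB1 hB2)
  qed
  have bd: "has_boundary_data m n (- suminf (\<lambda>k. c (- int k - 1))) (suminf (\<lambda>k. c (int k)))
                                  (suminf (\<lambda>k. d (- int k - 1))) (- suminf (\<lambda>k. d (int k)))"
    unfolding has_boundary_data_def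
  proof (intro conjI)
    have "m (- int k) = - (\<Sum>j<k. c (- int j - 1))" for k by (cases "k = 0") (auto simp: m_def)
    then show "(\<lambda>k. m (- int k)) \<longlonglongrightarrow> - suminf (\<lambda>k. c (- int k - 1))"
      using tendsto_minus[OF summable_LIMSEQ[OF cB]] by simp
    have "m (int k) = (\<Sum>j<k. c (int j))" for k by (simp add: m_def)
    then show "(\<lambda>k. m (int k)) \<longlonglongrightarrow> suminf (\<lambda>k. c (int k))"
      using summable_LIMSEQ[OF cF] by simp
    have "n (- int k) = (\<Sum>j<k. d (- int j - 1))" for k by (cases "k = 0") (auto simp: n_def)
    then show "(\<lambda>k. n (- int k)) \<longlonglongrightarrow> suminf (\<lambda>k. d (- int k - 1))"
      using summable_LIMSEQ[OF dB] by simp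
    have "n (int k) = - (\<Sum>j<k. d (int j))" for k by (simp add: n_def)
    then show "(\<lambda>k. n (int k)) \<longlonglongrightarrow> - suminf (\<lambda>k. d (int k))"
      using tendsto_minus[OF summable_LIMSEQ[OF dF]] by simp
  qed
  show ?thesis using sol bd unfolding a_def b_def by blast
qed


lemma F_step:
  assumes p: "pos p" and t: "0 \<le> \<tau>" "\<tau> \<le> 1" and le: "snd p \<le> \<tau> * fst p"
  shows "fst (F p) \<le> \<tau>^2 * fst p \<and> snd (F p) \<le> (\<tau>^2/2) * fst (F p)"
proof -
  obtain a b where P: "p = (a,b)" by (cases p)
  have a: "a > 0" and b: "b > 0" using p P by (auto simp: pos_def)
  have le': "b \<le> \<tau> * a" using le P by simp
  have r: "rel a b (Fa a b) (Fb a b)" using rel_F[OF a b] .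
  have fa: "Fa a b < b^2/a" using Fa_lt_s[OF a b] .
  have "b^2 \<le> (\<tau>*a)^2" using le' b by (intro power_mono) auto
  then have "b^2/a \<le> \<tau>^2 * a" using a by (simp add: power_mult_distrib field_simps power2_eq_square)
  then have 1: "Fa a b \<le> \<tau>^2 * a" using fa by simp
  have e: "Fb a b * (2*a+b) = (Fa a b)^2" using r by (simp add: rel_def)
  have fap: "Fa a b > 0" using Fa_pos[OF a b] .
  have "Fb a b * (2*a+b) \<le> (\<tau>^2 * a) * Fa a b" using e 1 fap by (simp add: power2_eq_square mult_right_mono)
  also have "\<dots> \<le> (\<tau>^2/2) * Fa a b * (2*a+b)" using b fap t by (simp add: algebra_simps mult_left_mono)
  finally have "Fb a b \<le> (\<tau>^2/2) * Fa a b" using a b by (simp add: mult_le_cancel_right)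
  then show ?thesis using 1 P by (simp add: F_def)
qed

lemma tail_bound:
  assumes p: "pos p" and le: "snd p \<le> fst p"
  shows "fst ((F ^^ k) p) \<le> 4 * fst p * (1/4)^k \<and> snd ((F ^^ k) p) \<le> fst ((F ^^ k) p)"
proof -
  have fp: "fst p > 0" using p by (simp add: pos_def)
  have s1: "fst (F p) \<le> fst p \<and> snd (F p) \<le> (1/2) * fst (F p)"
    using F_step[OF p _ _, of 1] le by simp
  have inv: "fst ((F ^^ Suc j) p) \<le> fst p * (1/4)^j \<and> snd ((F ^^ Suc j) p) \<le> (1/2) * fst ((F ^^ Suc j) p)" for j
  proof (induction j)
    case 0 then show ?case using s1 by simp
  next
    case (Suc j)
    let ?q = "(F ^^ Suc j) p"
    have q: "pos ?q" using pos_Fn[OF p] .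
    have st: "fst (F ?q) \<le> (1/2)^2 * fst ?q \<and> snd (F ?q) \<le> ((1/2)^2/2) * fst (F ?q)"
      using F_step[OF q, of "1/2"] Suc by simp
    have fq: "fst (F ?q) > 0" using pos_F[OF q] by (simp add: pos_def)
    have "fst (F ?q) \<le> (1/4) * (fst p * (1/4)^j)" using st Suc by (simp add: power2_eq_square)
    moreover have "snd (F ?q) \<le> (1/2) * fst (F ?q)" using st fq by (simp add: power2_eq_square)
    ultimately show ?case by (simp add: algebra_simps)
  qed
  show ?thesis
  proof (cases k)
    case 0 then show ?thesis using le fp by simp
  next
    case (Suc j)
    have fq: "fst ((F ^^ k) p) > 0" using pos_Fn[OF p] by (simp add: pos_def)
    have "fst p * (1/4)^j = 4 * fst p * (1/4)^k" using Suc by simp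
    then show ?thesis using inv[of j] Suc fq by auto
  qed
qed

lemma snd_F_le_fst:
  assumes p: "pos p" and h: "(snd p)^2 / fst p \<le> 3 * (2 * fst p + snd p)"
  shows "snd (F p) \<le> fst (F p)"
proof -
  obtain a b where P: "p = (a,b)" by (cases p)
  have a: "a > 0" and b: "b > 0" using p P by (auto simp: pos_def)
  define cc where "cc = 2*a+b"
  have cc: "cc > 0" using a b by (simp add: cc_def)
  have eq: "2 * (Fa a b)^2 + cc * Fa a b = cc * (b^2/a)" using Fa_eq[OF a b] by (simp add: cc_def)
  have fap: "Fa a b > 0" using Fa_pos[OF a b] .
  have h': "b^2/a \<le> 3*cc" using h P by (simp add: cc_def)
  have le: "Fa a b \<le> cc"
  proof (rule ccontr)
    assume "\<not> Fa a b \<le> cc"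
    then have g: "Fa a b > cc" by simp
    then have "2 * (Fa a b)^2 > 2 * cc^2" using cc by (simp add: power_strict_mono)
    moreover have "cc * Fa a b > cc * cc" using g cc by simp
    ultimately have "cc * (b^2/a) > 3 * cc * cc" using eq by (simp add: power2_eq_square)
    moreover have "cc * (b^2/a) \<le> cc * (3 * cc)" using h' cc by (intro mult_left_mono) auto
    ultimately show False by simp
  qed
  have e: "Fb a b * cc = (Fa a b)^2" using rel_F[OF a b] by (simp add: rel_def cc_def)
  have "Fb a b * cc \<le> Fa a b * cc" using e le fap by (simp add: power2_eq_square)
  then show ?thesis using cc P by (simp add: F_def)
qed

lemma cont_suminf:
  fixes f :: "nat \<Rightarrow> real \<Rightarrow> real"
  assumes c: "\<And>k. continuous_on S (f k)" and b: "\<And>k x. x \<in> S \<Longrightarrow> \<bar>f k x\<bar> \<le> M k"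
    and s: "summable M"
  shows "continuous_on S (\<lambda>x. suminf (\<lambda>k. f k x))"
proof (rule uniform_limit_theorem)
  show "uniform_limit S (\<lambda>n x. \<Sum>i<n. f i x) (\<lambda>x. suminf (\<lambda>i. f i x)) sequentially"
    by (rule Weierstrass_m_test) (use b s in auto)
  show "\<forall>\<^sub>F n in sequentially. continuous_on S (\<lambda>x. \<Sum>i<n. f i x)"
    using c by (intro always_eventually allI continuous_on_sum) auto
qed simp

lemma F_cont: "continuous_on {p. pos p} F"
proof -
  have "continuous_on {p. pos p} (\<lambda>p. Fa (fst p) (snd p))"
    unfolding Fa_def by (intro continuous_intros) (auto simp: pos_def)
  moreover have "continuous_on {p. pos p} (\<lambda>p. Fb (fst p) (snd p))"
    unfolding Fb_def using calculation by (intro continuous_intros) (auto simp: pos_def)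
  ultimately show ?thesis unfolding F_def by (intro continuous_on_Pair) auto
qed

lemma Fn_cont:
  assumes "continuous_on S g" "\<And>x. x \<in> S \<Longrightarrow> pos (g x)"
  shows "continuous_on S (\<lambda>x. (F ^^ k) (g x))"
proof (induction k)
  case 0 then show ?case using assms(1) by simp
next
  case (Suc k)
  have "continuous_on S (\<lambda>x. F ((F ^^ k) (g x)))"
    by (rule continuous_on_compose2[OF F_cont Suc]) (use assms(2) pos_Fn in blast)
  then show ?case by simp
qed


definition r1 :: real where "r1 = (3 + sqrt 33) / 2"

lemma r1_root: "r1^2 = 3 * r1 + 6"
proof -
  have s: "(sqrt 33)^2 = (33::real)" by simp
  show ?thesis unfolding r1_def using s by (simp add: power2_eq_square field_simps)
qed

lemma r1_bounds: "1 < r1" "r1 < 5"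
proof -
  have "sqrt 33 > (5::real)" by (rule real_less_rsqrt) simp
  moreover have "sqrt 33 < (7::real)" by (rule real_less_lsqrt) auto
  ultimately show "1 < r1" "r1 < 5" by (auto simp: r1_def)
qed

lemma D_iff: assumes "1 \<le> r" shows "r \<le> r1 \<longleftrightarrow> r^2 \<le> 3 * r + 6"
proof -
  define r2 where "r2 = (3 - sqrt 33) / 2"
  have s: "(sqrt 33)^2 = (33::real)" by simp
  have fac: "r^2 - 3*r - 6 = (r - r1) * (r - r2)"
    unfolding r1_def r2_def using s by (simp add: power2_eq_square field_simps)
  have "sqrt 33 > (5::real)" by (rule real_less_rsqrt) simp
  then have "r2 < 0" by (simp add: r2_def)
  then have "r - r2 > 0" using assms by simp
  then have "r^2 \<le> 3 * r + 6 \<longleftrightarrow> (r - r1) * (r - r2) \<le> 0" using fac by linarith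
  also have "\<dots> \<longleftrightarrow> r - r1 \<le> 0" using \<open>r - r2 > 0\<close> by (simp add: mult_le_0_iff)
  finally show ?thesis by simp
qed

definition pF :: "real \<Rightarrow> nat \<Rightarrow> real \<times> real" where "pF r k = (F ^^ k) (r, 1)"
definition pB :: "real \<Rightarrow> nat \<Rightarrow> real \<times> real" where "pB r k = (F ^^ k) (F (1, r))"

definition Aval :: "real \<Rightarrow> real" where
  "Aval r = suminf (\<lambda>k. fst (pF r k)) + suminf (\<lambda>k. snd (pB r k))"
definition Bval :: "real \<Rightarrow> real" where
  "Bval r = suminf (\<lambda>k. snd (pF r k)) + suminf (\<lambda>k. fst (pB r k))"
definition G :: "real \<Rightarrow> real" where
  "G r = (Aval r + 2 * Bval r) / (2 * Aval r + Bval r)"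

lemma D_facts: assumes "r \<in> {1..r1}" shows "1 \<le> r" "r \<le> 5" "r^2 \<le> 3 * r + 6"
  using assms r1_bounds D_iff by auto

lemma pF_bound: assumes "r \<in> {1..r1}"
  shows "pos (pF r k)" "fst (pF r k) \<le> 100 * (1/4)^k" "snd (pF r k) \<le> fst (pF r k)"
proof -
  note d = D_facts[OF assms]
  have p: "pos (r,1)" using d by (simp add: pos_def)
  show "pos (pF r k)" unfolding pF_def using pos_Fn[OF p] .
  have t: "fst (pF r k) \<le> 4 * r * (1/4)^k \<and> snd (pF r k) \<le> fst (pF r k)"
    unfolding pF_def using tail_bound[OF p] d by simp
  have "4 * r * (1/4::real)^k \<le> 100 * (1/4)^k" using d by (intro mult_right_mono) auto
  then show "fst (pF r k) \<le> 100 * (1/4)^k" using t by linarith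
  show "snd (pF r k) \<le> fst (pF r k)" using t by simp
qed

lemma pB_bound: assumes "r \<in> {1..r1}"
  shows "pos (pB r k)" "fst (pB r k) \<le> 100 * (1/4)^k" "snd (pB r k) \<le> fst (pB r k)"
proof -
  note d = D_facts[OF assms]
  have p: "pos (1,r)" using d by (simp add: pos_def)
  have q: "pos (F (1,r))" using pos_F[OF p] .
  have le: "snd (F (1,r)) \<le> fst (F (1,r))" by (rule snd_F_le_fst[OF p]) (use d in simp)
  have f: "fst (F (1,r)) \<le> 25"
  proof -
    have "fst (F (1,r)) < r^2" using Fa_lt_s[of 1 r] d by (simp add: F_def)
    moreover have "r^2 \<le> 25" using d by (simp add: power2_eq_square)
    ultimately show ?thesis by simp
  qed
  show "pos (pB r k)" unfolding pB_def using pos_Fn[OF q] .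
  have t: "fst (pB r k) \<le> 4 * fst (F (1,r)) * (1/4)^k \<and> snd (pB r k) \<le> fst (pB r k)"
    unfolding pB_def using tail_bound[OF q le] by simp
  have "4 * fst (F (1,r)) * (1/4::real)^k \<le> 100 * (1/4)^k" using f by (intro mult_right_mono) auto
  then show "fst (pB r k) \<le> 100 * (1/4)^k" using t by linarith
  show "snd (pB r k) \<le> fst (pB r k)" using t by simp
qed

lemma geo_summable: "summable (\<lambda>k. 100 * (1/4::real)^k)"
  by (intro summable_mult summable_geometric) simp

lemma sums_D: assumes "r \<in> {1..r1}"
  shows "summable (\<lambda>k. fst (pF r k))" "summable (\<lambda>k. snd (pF r k))"
        "summable (\<lambda>k. fst (pB r k))" "summable (\<lambda>k. snd (pB r k))"
proof -
  have pp: "fst (pF r k) > 0" "snd (pF r k) > 0" "fst (pB r k) > 0" "snd (pB r k) > 0" for k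
    using pF_bound(1)[OF assms, of k] pB_bound(1)[OF assms, of k] by (auto simp: pos_def)
  note ab = abs_of_pos[OF pp(1)] abs_of_pos[OF pp(2)] abs_of_pos[OF pp(3)] abs_of_pos[OF pp(4)]
  show "summable (\<lambda>k. fst (pF r k))"
    by (rule summable_comparison_test'[OF geo_summable, of 0]) (use ab pF_bound[OF assms] in auto)
  show "summable (\<lambda>k. snd (pF r k))"
    by (rule summable_comparison_test'[OF geo_summable, of 0]) (use ab pF_bound(2,3)[OF assms] in \<open>auto intro: order_trans[OF pF_bound(3)[OF assms] pF_bound(2)[OF assms]]\<close>)
  show "summable (\<lambda>k. fst (pB r k))"
    by (rule summable_comparison_test'[OF geo_summable, of 0]) (use ab pB_bound[OF assms] in auto)
  show "summable (\<lambda>k. snd (pB r k))"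
    by (rule summable_comparison_test'[OF geo_summable, of 0]) (use ab pB_bound(2,3)[OF assms] in \<open>auto intro: order_trans[OF pB_bound(3)[OF assms] pB_bound(2)[OF assms]]\<close>)
qed


lemma orb_pF: "orb (r,1) (int k) = pF r k" by (simp add: orb_nat pF_def)
lemma orb_pB: "orb (r,1) (- int k - 1) = sw (pB r k)"
  by (simp add: orb_neg1 pB_def sw_def funpow_Suc_right del: funpow.simps)

lemma has_sum_AB: assumes "r \<in> {1..r1}"
  shows "((\<lambda>i. fst (orb (r,1) i)) has_sum Aval r) UNIV"
        "((\<lambda>i. snd (orb (r,1) i)) has_sum Bval r) UNIV"
proof -
  note s = sums_D[OF assms]
  have pos: "pos (orb (r,1) i)" for i using orb_pos[of "(r,1)"] D_facts[OF assms] by (simp add: pos_def)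
  show "((\<lambda>i. fst (orb (r,1) i)) has_sum Aval r) UNIV"
    unfolding Aval_def
    by (rule int_has_sum_split) (use pos s in \<open>auto simp: pos_def orb_pF orb_pB intro: less_imp_le summable_sums\<close>)
  show "((\<lambda>i. snd (orb (r,1) i)) has_sum Bval r) UNIV"
    unfolding Bval_def
    by (rule int_has_sum_split) (use pos s in \<open>auto simp: pos_def orb_pF orb_pB intro: less_imp_le summable_sums\<close>)
qed

lemma AB_pos: assumes "r \<in> {1..r1}" shows "Aval r > 0" "Bval r > 0"
proof -
  note s = sums_D[OF assms]
  have pp: "fst (pF r k) > 0" "snd (pF r k) > 0" "fst (pB r k) > 0" "snd (pB r k) > 0" for k
    using pF_bound(1)[OF assms, of k] pB_bound(1)[OF assms, of k] by (auto simp: pos_def)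
  have "suminf (\<lambda>k. fst (pF r k)) > 0" "suminf (\<lambda>k. snd (pB r k)) > 0"
       "suminf (\<lambda>k. snd (pF r k)) > 0" "suminf (\<lambda>k. fst (pB r k)) > 0"
    using s pp by (auto intro!: suminf_pos)
  then show "Aval r > 0" "Bval r > 0" by (auto simp: Aval_def Bval_def)
qed

lemma G_in: assumes "r \<in> {1..r1}" shows "G r \<in> mina_margins"
proof -
  note s = sums_D[OF assms]
  note d = D_facts[OF assms]
  have p: "pos (r,1)" using d by (simp add: pos_def)
  have sw1: "sw (r,1) = (1,r)" by (simp add: sw_def)
  have e: "(F ^^ Suc k) (1,r) = pB r k" for k by (simp add: pB_def funpow_Suc_right del: funpow.simps)
  have hB1: "summable (\<lambda>k. fst ((F ^^ k) (sw (r,1))))"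
    unfolding sw1 using s(3) summable_Suc_iff[of "\<lambda>k. fst ((F ^^ k) (1,r))"] e by simp
  have hB2: "summable (\<lambda>k. snd ((F ^^ k) (sw (r,1))))"
    unfolding sw1 using s(4) summable_Suc_iff[of "\<lambda>k. snd ((F ^^ k) (1,r))"] e by simp
  obtain m n mL mR nL nR where sol: "positive_ABMN_solution (\<lambda>i. fst (orb (r,1) i)) (\<lambda>i. snd (orb (r,1) i)) m n"
      and bd: "has_boundary_data m n mL mR nL nR"
    using construct[OF p _ _ hB1 hB2] s(1,2) unfolding pF_def by blast
  note me = margin_eq[OF sol bd]
  have A: "infsum (\<lambda>i. fst (orb (r,1) i)) UNIV = Aval r" using has_sum_AB(1)[OF assms] by (rule infsumI)
  have B: "infsum (\<lambda>i. snd (orb (r,1) i)) UNIV = Bval r" using has_sum_AB(2)[OF assms] by (rule infsumI)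
  have "mina_margin mL mR nL nR = G r"
    unfolding mina_margin_def G_def using me(3,4) A B by simp
  moreover have "mina_margin mL mR nL nR \<in> mina_margins"
    unfolding mina_margins_def using sol bd by blast
  ultimately show ?thesis by simp
qed

lemma G_cont: "continuous_on {1..r1} G"
proof -
  have g1: "continuous_on {1..r1} (\<lambda>r::real. (r, 1::real))" by (intro continuous_intros)
  have g2: "continuous_on {1..r1} (\<lambda>r::real. F (1, r))"
    by (rule continuous_on_compose2[OF F_cont]) (auto intro!: continuous_intros simp: pos_def)
  have pos1: "pos (r,1)" if "r \<in> {1..r1}" for r using that by (simp add: pos_def)
  have pos2: "pos (F (1,r))" if "r \<in> {1..r1}" for r using that by (intro pos_F) (simp add: pos_def)
  have cF: "continuous_on {1..r1} (\<lambda>r. pF r k)" for k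
    unfolding pF_def by (rule Fn_cont[OF g1 pos1])
  have cB: "continuous_on {1..r1} (\<lambda>r. pB r k)" for k
    unfolding pB_def by (rule Fn_cont[OF g2 pos2])
  have bnd: "\<bar>fst (pF r k)\<bar> \<le> 100 * (1/4)^k" "\<bar>snd (pF r k)\<bar> \<le> 100 * (1/4)^k"
            "\<bar>fst (pB r k)\<bar> \<le> 100 * (1/4)^k" "\<bar>snd (pB r k)\<bar> \<le> 100 * (1/4)^k"
    if "r \<in> {1..r1}" for r k
    using pF_bound[OF that, of k] pB_bound[OF that, of k] by (auto simp: pos_def)
  have c1: "continuous_on {1..r1} (\<lambda>r. suminf (\<lambda>k. fst (pF r k)))"
    by (rule cont_suminf[OF _ _ geo_summable]) (use cF bnd in \<open>auto intro: continuous_on_fst\<close>)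
  have c2: "continuous_on {1..r1} (\<lambda>r. suminf (\<lambda>k. snd (pF r k)))"
    by (rule cont_suminf[OF _ _ geo_summable]) (use cF bnd in \<open>auto intro: continuous_on_snd\<close>)
  have c3: "continuous_on {1..r1} (\<lambda>r. suminf (\<lambda>k. fst (pB r k)))"
    by (rule cont_suminf[OF _ _ geo_summable]) (use cB bnd in \<open>auto intro: continuous_on_fst\<close>)
  have c4: "continuous_on {1..r1} (\<lambda>r. suminf (\<lambda>k. snd (pB r k)))"
    by (rule cont_suminf[OF _ _ geo_summable]) (use cB bnd in \<open>auto intro: continuous_on_snd\<close>)
  have cA: "continuous_on {1..r1} Aval" unfolding Aval_def by (intro continuous_on_add c1 c4)
  have cBv: "continuous_on {1..r1} Bval" unfolding Bval_def by (intro continuous_on_add c2 c3)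
  show ?thesis unfolding G_def
  proof (intro continuous_on_divide continuous_on_add continuous_on_mult continuous_on_const cA cBv ballI)
    fix r assume "r \<in> {1..r1}"
    then show "2 * Aval r + Bval r \<noteq> 0" using AB_pos[of r] by simp
  qed
qed


definition rho :: "real \<times> real \<Rightarrow> real" where "rho p = fst p / snd p"

lemma ratio_step:
  assumes p: "pos p" and q: "pos q" and r: "relp p q"
  shows "rho q > 2 * (rho p)^2 + rho p"
proof -
  obtain a b where P: "p = (a,b)" by (cases p)
  obtain u v where Q: "q = (u,v)" by (cases q)
  have a: "a > 0" and b: "b > 0" and u: "u > 0" and v: "v > 0" using p q P Q by (auto simp: pos_def)
  have r1: "u^2 = v * (2*a+b)" and r2: "u + 2 * v = b^2/a" using r P Q by (auto simp: relp_def rel_def)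
  have us: "u < b^2/a" using r2 v by simp
  have c: "2*a+b > 0" using a b by simp
  have rq: "rho q = (2*a+b) / u" using r1 u v unfolding rho_def Q by (simp add: power2_eq_square field_simps)
  have "(2*a+b) / u > (2*a+b) / (b^2/a)" using us u c a b by (intro divide_strict_left_mono) auto
  also have "(2*a+b) / (b^2/a) = 2 * (rho p)^2 + rho p"
    unfolding rho_def P using a b by (simp add: power2_eq_square field_simps)
  finally show ?thesis using rq by simp
qed

lemma grow:
  assumes P: "\<And>i. pos (z i)" and R: "\<And>i. relp (z i) (z (i+1))"
  shows "\<exists>n::nat. rho (z (int n)) > 1"
proof (rule ccontr)
  assume "\<not> ?thesis"
  then have le: "rho (z (int n)) \<le> 1" for n by (simp add: not_less)
  define r0 where "r0 = rho (z 0)"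
  have r0: "r0 > 0" using P[of 0] by (simp add: r0_def rho_def pos_def)
  have st: "rho (z (int (Suc n))) > 2 * (rho (z (int n)))^2 + rho (z (int n))" for n
    using ratio_step[OF P P R, of "int n"] by (simp add: add.commute)
  have ind: "rho (z (int n)) \<ge> r0 + real n * (2 * r0^2)" for n
  proof (induction n)
    case 0 then show ?case by (simp add: r0_def)
  next
    case (Suc n)
    have "rho (z (int n)) \<ge> r0" using Suc r0 by (smt (verit) mult_nonneg_nonneg of_nat_0_le_iff zero_le_power2)
    then have "(rho (z (int n)))^2 \<ge> r0^2" using r0 by (intro power_mono) auto
    then show ?case using st[of n] Suc by (simp add: algebra_simps)
  qed
  obtain n where n: "real n > 1 / (2 * r0^2)" using reals_Archimedean2 by blast
  have "real n * (2 * r0^2) > 1" using n r0 by (simp add: field_simps)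
  then have "rho (z (int n)) > 1" using ind[of n] r0 by simp
  then show False using le[of n] by simp
qed

lemma D_step:
  assumes p: "pos p" and q: "pos q" and r: "relp p q" and le: "fst p \<le> snd p"
  shows "(rho q)^2 \<le> 3 * rho q + 6"
proof -
  obtain a b where P: "p = (a,b)" by (cases p)
  obtain u v where Q: "q = (u,v)" by (cases q)
  have a: "a > 0" and b: "b > 0" and u: "u > 0" and v: "v > 0" using p q P Q by (auto simp: pos_def)
  have r1: "u^2 = v * (2*a+b)" and r2: "u + 2 * v = b^2/a" using r P Q by (auto simp: relp_def rel_def)
  have ab: "a \<le> b" using le P by simp
  have "a*a \<le> b*b" using ab a by (intro mult_mono) auto
  moreover have "a*b \<le> b*b" using ab b by (intro mult_right_mono) auto
  ultimately have "a * (2*a+b) \<le> 3 * b^2" by (simp add: power2_eq_square algebra_simps)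
  then have cs: "2*a+b \<le> 3 * (b^2/a)" using a by (simp add: field_simps)
  have "u^2 \<le> 3*u * v + 6 * v^2"
  proof -
    have "u^2 = v * (2*a+b)" by (rule r1)
    also have "\<dots> \<le> v * (3 * (b^2/a))" using cs v by (intro mult_left_mono) auto
    also have "\<dots> = v * (3 * (u + 2 * v))" by (simp only: r2)
    also have "\<dots> = 3*u * v + 6 * v^2" by (simp add: power2_eq_square algebra_simps)
    finally show ?thesis .
  qed
  then show ?thesis unfolding rho_def Q using v by (simp add: power2_eq_square field_simps)
qed


lemma covering:
  assumes sol: "positive_ABMN_solution a b m n" and bd: "has_boundary_data m n mL mR nL nR"
  shows "\<exists>r \<in> {1..r1}. mina_margin mL mR nL nR = G r"
proof -
  note S = abmn_to_rel[OF sol]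
  define x where "x i = (a i, b i)" for i
  have P: "pos (x i)" for i using S(1) by (simp add: x_def)
  have R: "relp (x i) (x (i+1))" for i using S(2) by (simp add: x_def)
  define y where "y i = sw (x (- i))" for i
  have Py: "pos (y i)" for i using P by (simp add: y_def)
  have Ry: "relp (y i) (y (i+1))" for i
  proof -
    have "relp (x (- i - 1)) (x (- i - 1 + 1))" by (rule R)
    then show ?thesis using relp_sw[OF P P] by (simp add: y_def)
  qed
  obtain n1 where n1: "rho (y (int n1)) > 1" using grow[of y, OF Py Ry] by blast
  define j0 where "j0 = - int n1"
  have j0: "rho (x j0) < 1"
  proof -
    have "rho (y (int n1)) = b j0 / a j0" by (simp add: y_def rho_def sw_def x_def j0_def)
    then have "b j0 / a j0 > 1" using n1 by simp
    then have "b j0 > a j0" using P[of j0] by (simp add: x_def pos_def field_simps)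
    then show ?thesis using P[of j0] by (simp add: x_def pos_def rho_def field_simps)
  qed
  have Pz: "pos (x (j0 + i))" for i using P .
  have Rz: "relp (x (j0 + i)) (x (j0 + (i+1)))" for i using R[of "j0 + i"] by (simp add: add.assoc)
  obtain n2 where n2: "rho (x (j0 + int n2)) > 1"
    using grow[of "\<lambda>i. x (j0 + i)", OF Pz Rz] by blast
  define N where "N = (LEAST n::nat. rho (x (j0 + int n)) \<ge> 1)"
  have N1: "rho (x (j0 + int N)) \<ge> 1" unfolding N_def by (rule LeastI[of _ n2]) (use n2 in simp)
  have N0: "N \<noteq> 0" using N1 j0 by (cases "N = 0") auto
  define k where "k = j0 + int N"
  have k1: "rho (x k) \<ge> 1" using N1 by (simp add: k_def)
  have k0: "rho (x (k - 1)) < 1"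
  proof -
    have "\<not> rho (x (j0 + int (N - 1))) \<ge> 1" unfolding N_def by (rule not_less_Least) (use N0 N_def in auto)
    moreover have "j0 + int (N - 1) = k - 1" using N0 by (simp add: k_def)
    ultimately show ?thesis by simp
  qed
  define rk where "rk = rho (x k)"
  have bk: "b k > 0" and ak: "a k > 0" using P[of k] by (auto simp: x_def pos_def)
  have rkD: "rk \<in> {1..r1}"
  proof -
    have bpos: "b (k-1) > 0" using P[of "k-1"] by (simp add: x_def pos_def)
    have "a (k-1) / b (k-1) < 1" using k0 by (simp add: rho_def x_def)
    then have "a (k-1) < b (k-1)" using bpos by (simp add: divide_less_eq_1_pos)
    then have le: "fst (x (k-1)) \<le> snd (x (k-1))" by (simp add: x_def)
    have "(rho (x k))^2 \<le> 3 * rho (x k) + 6"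
      using D_step[OF P P _ le, of k] R[of "k-1"] by simp
    then show ?thesis using D_iff k1 by (simp add: rk_def)
  qed
  have xk: "x k = sc (b k) (rk, 1)"
  proof -
    have "b k * (a k / b k) = a k" using bk by simp
    then show ?thesis by (simp add: x_def sc_def rk_def rho_def)
  qed
  have "1 \<le> rk" using rkD by simp
  then have prk: "pos (rk, 1)" by (simp add: pos_def)
  have shift: "x (k + i) = sc (b k) (orb (rk,1) i)" for i
  proof -
    have Rk: "relp (x (k+i)) (x (k+(i+1)))" for i using R[of "k+i"] by (simp add: add.assoc)
    have "(\<lambda>i. x (k+i)) i = orb ((\<lambda>i. x (k+i)) 0) i"
      by (rule seq_unique[of "\<lambda>i. x (k+i)"]) (use P Rk in auto)
    then show ?thesis using orb_sc[OF bk prk] xk by simp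
  qed
  note me = margin_eq[OF sol bd]
  define A where "A = infsum a UNIV"
  define B where "B = infsum b UNIV"
  have ha: "(a has_sum A) UNIV" using me(1) by (simp add: A_def)
  have hb: "(b has_sum B) UNIV" using me(2) by (simp add: B_def)
  have ra: "((\<lambda>i. a (k+i)) has_sum A) UNIV"
    using ha by (subst has_sum_reindex_bij_witness[where i="\<lambda>i. i - k" and j="\<lambda>i. k + i" and T=UNIV and h=a]) auto
  have rb: "((\<lambda>i. b (k+i)) has_sum B) UNIV"
    using hb by (subst has_sum_reindex_bij_witness[where i="\<lambda>i. i - k" and j="\<lambda>i. k + i" and T=UNIV and h=b]) auto
  have ea: "a (k+i) = b k * fst (orb (rk,1) i)" for i using shift[of i] by (simp add: x_def sc_def)
  have eb: "b (k+i) = b k * snd (orb (rk,1) i)" for i using shift[of i] by (simp add: x_def sc_def)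
  have "((\<lambda>i. (1 / b k) * a (k+i)) has_sum ((1 / b k) * A)) UNIV" using ra by (rule has_sum_cmult_right)
  then have "((\<lambda>i. fst (orb (rk,1) i)) has_sum (A / b k)) UNIV" using ea bk by simp
  then have Aeq: "A / b k = Aval rk" using has_sum_AB(1)[OF rkD] has_sum_unique by blast
  have "((\<lambda>i. (1 / b k) * b (k+i)) has_sum ((1 / b k) * B)) UNIV" using rb by (rule has_sum_cmult_right)
  then have "((\<lambda>i. snd (orb (rk,1) i)) has_sum (B / b k)) UNIV" using eb bk by simp
  then have Beq: "B / b k = Bval rk" using has_sum_AB(2)[OF rkD] has_sum_unique by blast
  have A': "A = b k * Aval rk" and B': "B = b k * Bval rk" using Aeq Beq bk by (auto simp: field_simps)
  have "mina_margin mL mR nL nR = (A + 2 * B) / (2 * A + B)"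
    unfolding mina_margin_def using me(3,4) by (simp add: A_def B_def)
  also have "\<dots> = G rk"
  proof -
    have e1: "b k * Aval rk + 2 * (b k * Bval rk) = b k * (Aval rk + 2 * Bval rk)" by (simp add: algebra_simps)
    have e2: "2 * (b k * Aval rk) + b k * Bval rk = b k * (2 * Aval rk + Bval rk)" by (simp add: algebra_simps)
    show ?thesis unfolding A' B' G_def e1 e2 using bk by (simp only: mult_divide_mult_cancel_left_if) simp
  qed
  finally show ?thesis using rkD by blast
qed


lemma sol_scale:
  assumes sol: "positive_ABMN_solution a b m n" and t: "t > 0"
  shows "positive_ABMN_solution (\<lambda>i. t * a i) (\<lambda>i. t * b i) (\<lambda>i. t * m i + \<sigma>) (\<lambda>i. t * n i + \<tau>)"
proof -
  note S = abmn_to_rel[OF sol]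
  show ?thesis
  proof (rule rel_to_abmn)
    fix i
    show "pos (t * a i, t * b i)" using pos_sc[OF t S(1)[of i]] by (simp add: sc_def)
    show "relp (t * a i, t * b i) (t * a (i+1), t * b (i+1))"
      using relp_sc[OF t S(1)[of i] S(2)[of i]] by (simp add: sc_def)
    show "(t * m (i+1) + \<sigma>) - (t * m i + \<sigma>) = 2 * (t * a i) + t * b i"
      using S(3)[of i] by (simp add: algebra_simps flip: right_diff_distrib)
    have ai: "a i > 0" using S(1)[of i] by (simp add: pos_def)
    have "(t * n i + \<tau>) - (t * n (i+1) + \<tau>) = t * ((b i)^2 / a i)"
      using S(4)[of i] by (simp add: algebra_simps flip: right_diff_distrib)
    also have "\<dots> = (t * b i)^2 / (t * a i)" using t ai by (simp add: power2_eq_square field_simps)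
    finally show "(t * n i + \<tau>) - (t * n (i+1) + \<tau>) = (t * b i)^2 / (t * a i)" .
  qed
qed

lemma sol_swap:
  assumes sol: "positive_ABMN_solution a b m n"
  shows "positive_ABMN_solution (\<lambda>i. b (- i)) (\<lambda>i. a (- i)) (\<lambda>i. n (- i)) (\<lambda>i. m (- i))"
proof -
  note S = abmn_to_rel[OF sol]
  show ?thesis
  proof (rule rel_to_abmn)
    fix i :: int
    have e: "- (i + 1) = - i - 1" by simp
    have R: "relp (a (- i - 1), b (- i - 1)) (a (- i), b (- i))" using S(2)[of "- i - 1"] by simp
    have P1: "pos (a (- i), b (- i))" and P2: "pos (a (- i - 1), b (- i - 1))" using S(1) by auto
    show "pos (b (- i), a (- i))" using S(1)[of "- i"] by (simp add: pos_def)
    show "relp (b (- i), a (- i)) (b (- (i + 1)), a (- (i + 1)))"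
      using relp_sw[OF P2 P1] R unfolding e by (simp add: sw_def)
    have r: "(a (- i))^2 = b (- i) * (2 * a (- i - 1) + b (- i - 1))"
            "a (- i) + 2 * b (- i) = (b (- i - 1))^2 / a (- i - 1)"
      using R by (auto simp: relp_def rel_def)
    have bp: "b (- i) > 0" using P1 by (simp add: pos_def)
    show "n (- (i + 1)) - n (- i) = 2 * b (- i) + a (- i)"
      unfolding e using S(4)[of "- i - 1"] r(2) by simp
    have "m (- i) - m (- (i + 1)) = 2 * a (- i - 1) + b (- i - 1)"
      unfolding e using S(3)[of "- i - 1"] by simp
    also have "\<dots> = (a (- i))^2 / b (- i)" using r(1) bp by (simp add: field_simps)
    finally show "m (- i) - m (- (i + 1)) = (a (- i))^2 / b (- i)" .
  qed
qed

lemma bd_swap: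
  assumes "has_boundary_data m n mL mR nL nR"
  shows "has_boundary_data (\<lambda>i. n (- i)) (\<lambda>i. m (- i)) nR nL mR mL"
  using assms unfolding has_boundary_data_def by simp

lemma bd_scale:
  assumes "has_boundary_data m n mL mR nL nR"
  shows "has_boundary_data (\<lambda>i. t * m i + \<sigma>) (\<lambda>i. t * n i + \<tau>) (t*mL+\<sigma>) (t*mR+\<sigma>) (t*nL+\<tau>) (t*nR+\<tau>)"
  using assms unfolding has_boundary_data_def by (auto intro!: tendsto_intros)

lemma sol_gaps:
  assumes sol: "positive_ABMN_solution a b m n" and bd: "has_boundary_data m n mL mR nL nR"
  shows "mL < mR" "nR < nL"
proof -
  note me = margin_eq[OF sol bd]
  note S = abmn_to_rel[OF sol]
  have z: "((\<lambda>_::int. 0::real) has_sum 0) UNIV" by (rule has_sum_0) simp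
  have "0 < infsum a UNIV"
    by (rule has_sum_strict_mono[OF z me(1), where x=0]) (use S(1) in \<open>auto simp: pos_def intro: less_imp_le\<close>)
  moreover have "0 < infsum b UNIV"
    by (rule has_sum_strict_mono[OF z me(2), where x=0]) (use S(1) in \<open>auto simp: pos_def intro: less_imp_le\<close>)
  ultimately show "mL < mR" "nR < nL" using me(3,4) by auto
qed

lemma margins_eq_image: "mina_margins = G ` {1..r1}"
proof
  show "mina_margins \<subseteq> G ` {1..r1}"
    unfolding mina_margins_def using covering by fastforce
  show "G ` {1..r1} \<subseteq> mina_margins" using G_in by auto
qed

lemma margins_recip: assumes "x \<in> mina_margins" shows "1 / x \<in> mina_margins"
proof -
  from assms obtain mL mR nL nR a b m n where x: "x = mina_margin mL mR nL nR"
    and sol: "positive_ABMN_solution a b m n" and bd: "has_boundary_data m n mL mR nL nR"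
    unfolding mina_margins_def by blast
  have "mina_margin nR nL mR mL \<in> mina_margins"
    unfolding mina_margins_def using sol_swap[OF sol] bd_swap[OF bd] by blast
  moreover have "mina_margin nR nL mR mL = 1 / x" by (simp add: x mina_margin_def)
  ultimately show ?thesis by simp
qed

lemma margins_pos: assumes "x \<in> mina_margins" shows "x > 0"
  using assms AB_pos unfolding margins_eq_image G_def by (fastforce intro!: divide_pos_pos add_pos_pos mult_pos_pos)

lemma main_core:
  assumes num: "\<exists>rs \<in> {1..r1}. G rs \<le> 0.999904"
  shows "\<exists>lam::real. 0 < lam \<and> lam \<le> 1 \<and>
           mina_margins = {lam .. 1 / lam} \<and>
           (\<forall>mL mR nL nR.
              (\<exists>a b m n. positive_ABMN_solution a b m n \<and> has_boundary_data m n mL mR nL nR)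
              \<longleftrightarrow> (mL < mR \<and> nR < nL \<and> mina_margin mL mR nL nR \<in> {lam .. 1 / lam})) \<and>
           lam \<le> 0.999904"
proof -
  obtain c d where cd: "G ` {1..r1} = {c..d}" "c \<le> d"
    using continuous_image_closed_interval[OF _ G_cont] r1_bounds by (metis less_imp_le)
  have I: "mina_margins = {c..d}" using cd margins_eq_image by simp
  have cI: "c \<in> mina_margins" and dI: "d \<in> mina_margins" using I cd by auto
  have c0: "c > 0" and d0: "d > 0" using margins_pos cI dI by auto
  have "1 / c \<in> mina_margins" using margins_recip[OF cI] .
  then have 1: "1 / c \<le> d" unfolding I by (simp only: atLeastAtMost_iff)
  have "1 / d \<in> mina_margins" using margins_recip[OF dI] .
  then have "c \<le> 1 / d" unfolding I by (simp only: atLeastAtMost_iff)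
  then have 2: "d \<le> 1 / c" using c0 d0 by (simp add: field_simps)
  have dc: "d = 1 / c" using 1 2 by simp
  have I2: "mina_margins = {c .. 1 / c}" using I dc by simp
  have c1: "c \<le> 1"
  proof -
    have "c * c \<le> 1" using cd(2) dc c0 by (simp add: field_simps)
    then show ?thesis using c0 by (smt (verit) mult_le_cancel_left1)
  qed
  have cnum: "c \<le> 0.999904"
  proof -
    obtain rs where rs: "rs \<in> {1..r1}" "G rs \<le> 0.999904" using num by blast
    have "G rs \<in> {c..d}" using cd rs(1) by blast
    then show ?thesis using rs(2) by simp
  qed
  have iff: "(\<exists>a b m n. positive_ABMN_solution a b m n \<and> has_boundary_data m n mL mR nL nR)
              \<longleftrightarrow> (mL < mR \<and> nR < nL \<and> mina_margin mL mR nL nR \<in> {c .. 1 / c})" for mL mR nL nR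
  proof
    assume "\<exists>a b m n. positive_ABMN_solution a b m n \<and> has_boundary_data m n mL mR nL nR"
    then obtain a b m n where sol: "positive_ABMN_solution a b m n" and bd: "has_boundary_data m n mL mR nL nR"
      by blast
    have "mina_margin mL mR nL nR \<in> mina_margins" unfolding mina_margins_def using sol bd by blast
    then show "mL < mR \<and> nR < nL \<and> mina_margin mL mR nL nR \<in> {c .. 1 / c}"
      using sol_gaps[OF sol bd] I2 by simp
  next
    assume h: "mL < mR \<and> nR < nL \<and> mina_margin mL mR nL nR \<in> {c .. 1 / c}"
    then have "mina_margin mL mR nL nR \<in> mina_margins" using I2 by simp
    then obtain mL' mR' nL' nR' a b m n where mu: "mina_margin mL mR nL nR = mina_margin mL' mR' nL' nR'"
      and sol: "positive_ABMN_solution a b m n" and bd: "has_boundary_data m n mL' mR' nL' nR'"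
      unfolding mina_margins_def by blast
    note g = sol_gaps[OF sol bd]
    define t where "t = (mR - mL) / (mR' - mL')"
    have t: "t > 0" using h g by (simp add: t_def)
    define \<sigma> where "\<sigma> = mL - t * mL'"
    define \<tau> where "\<tau> = nR - t * nR'"
    have s2: "positive_ABMN_solution (\<lambda>i. t * a i) (\<lambda>i. t * b i) (\<lambda>i. t * m i + \<sigma>) (\<lambda>i. t * n i + \<tau>)"
      using sol_scale[OF sol t] .
    have b2: "has_boundary_data (\<lambda>i. t * m i + \<sigma>) (\<lambda>i. t * n i + \<tau>) (t*mL'+\<sigma>) (t*mR'+\<sigma>) (t*nL'+\<tau>) (t*nR'+\<tau>)"
      using bd_scale[OF bd] .
    have e1: "t*mL'+\<sigma> = mL" by (simp add: \<sigma>_def)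
    have tm: "t * (mR' - mL') = mR - mL" using g by (simp add: t_def)
    have "t*mR'+\<sigma> = mL + t * (mR' - mL')" by (simp add: \<sigma>_def algebra_simps)
    then have e2: "t*mR'+\<sigma> = mR" using tm by simp
    have e4: "t*nR'+\<tau> = nR" by (simp add: \<tau>_def)
    have "(nL - nR) / (mR - mL) = (nL' - nR') / (mR' - mL')" using mu by (simp add: mina_margin_def)
    then have "nL - nR = t * (nL' - nR')" using h g by (simp add: t_def field_simps)
    then have e3: "t*nL'+\<tau> = nL" by (simp add: \<tau>_def algebra_simps)
    show "\<exists>a b m n. positive_ABMN_solution a b m n \<and> has_boundary_data m n mL mR nL nR"
      using s2 b2 unfolding e1 e2 e3 e4 by blast
  qed
  show ?thesis using c0 c1 I2 iff cnum by (intro exI[of _ c]) blast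
qed


lemma step_encl:
  fixes a b al1 al2 be1 be2 L U V1 V2 :: real
  assumes h: "0 < al1" "al1 \<le> a" "a \<le> al2" "0 < be1" "be1 \<le> b" "b \<le> be2" "0 \<le> L" "0 < U"
    and cL: "al2 * (2*L^2 + (2*al2+be2)*L) \<le> (2*al1+be1)*be1^2"
    and cU: "al1 * (2*U^2 + (2*al1+be1)*U) \<ge> (2*al2+be2)*be2^2"
    and cV1: "al2 * (2*V1 + U) \<le> be1^2"
    and cV2: "al1 * (2*V2 + L) \<ge> be2^2"
  shows "L \<le> fst (F (a,b)) \<and> fst (F (a,b)) \<le> U \<and> V1 \<le> snd (F (a,b)) \<and> snd (F (a,b)) \<le> V2"
proof -
  have a: "a > 0" and b: "b > 0" using h by auto
  define x where "x = Fa a b"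
  define cc where "cc = 2*a+b"
  define ss where "ss = b^2/a"
  have eq: "2*x^2 + cc*x = cc * ss" using Fa_eq[OF a b] by (simp add: x_def cc_def ss_def)
  have xp: "x > 0" using Fa_pos[OF a b] by (simp add: x_def)
  have c1: "2*al1+be1 \<le> cc" and c2: "cc \<le> 2*al2+be2" using h by (auto simp: cc_def)
  have cpos: "cc > 0" using a b by (simp add: cc_def)
  have b2: "be1^2 \<le> b^2" "b^2 \<le> be2^2" using h by (auto intro!: power_mono)
  have s1: "be1^2/al2 \<le> ss" unfolding ss_def using h b2 by (intro frac_le) auto
  have s2: "ss \<le> be2^2/al1" unfolding ss_def using h b2 by (intro frac_le) auto
  have sp: "ss > 0" using a b by (simp add: ss_def)
  have al2: "al2 > 0" using h by simp
  have xU: "x \<le> U"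
  proof (rule ccontr)
    assume "\<not> x \<le> U"
    then have g: "U < x" by simp
    have 1: "2*U^2 + (2*al1+be1)*U \<ge> (2*al2+be2)*(be2^2/al1)"
      using cU h(1) by (simp add: field_simps)
    have 2: "(2*al2+be2)*(be2^2/al1) \<ge> cc * ss"
      using c2 s2 cpos sp by (intro mult_mono) auto
    have 3: "2*U^2 + cc*U \<ge> 2*U^2 + (2*al1+be1)*U" using c1 h(8) by (simp add: mult_right_mono)
    have "U^2 < x^2" using g h(8) by (intro power_strict_mono) auto
    moreover have "cc*U < cc*x" using g cpos by simp
    ultimately have 4: "2*x^2 + cc*x > 2*U^2 + cc*U" by simp
    show False using 1 2 3 4 eq by linarith
  qed
  have xL: "L \<le> x"
  proof (rule ccontr)
    assume "\<not> L \<le> x"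
    then have g: "x < L" by simp
    have 1: "2*L^2 + (2*al2+be2)*L \<le> (2*al1+be1)*(be1^2/al2)"
      using cL al2 by (simp add: field_simps)
    have 2: "(2*al1+be1)*(be1^2/al2) \<le> cc * ss"
      using c1 s1 h by (intro mult_mono) auto
    have 3: "2*L^2 + cc*L \<le> 2*L^2 + (2*al2+be2)*L" using c2 h(7) by (simp add: mult_right_mono)
    have "x^2 < L^2" using g xp by (intro power_strict_mono) auto
    moreover have "cc*x < cc*L" using g cpos by simp
    ultimately have 4: "2*x^2 + cc*x < 2*L^2 + cc*L" by simp
    show False using 1 2 3 4 eq by linarith
  qed
  have fb: "snd (F (a,b)) = (ss - x)/2" by (simp add: F_def Fb_def x_def ss_def)
  have v1: "2*V1 + U \<le> be1^2/al2" using cV1 al2 by (simp add: field_simps)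
  have v2: "2*V2 + L \<ge> be2^2/al1" using cV2 h(1) by (simp add: field_simps)
  have "2*V1 \<le> ss - x" using v1 s1 xU by linarith
  then have "V1 \<le> snd (F (a,b))" unfolding fb by simp
  moreover have "ss - x \<le> 2*V2" using v2 s2 xL by linarith
  then have "snd (F (a,b)) \<le> V2" unfolding fb by simp
  ultimately show ?thesis using xU xL by (simp add: F_def x_def)
qed

lemma step_encl':
  fixes p :: "real \<times> real"
  assumes e: "al1 \<le> fst p \<and> fst p \<le> al2 \<and> be1 \<le> snd p \<and> snd p \<le> be2"
    and h: "0 < al1" "0 < be1" "0 \<le> L" "0 < U"
    and cL: "al2 * (2*L^2 + (2*al2+be2)*L) \<le> (2*al1+be1)*be1^2"
    and cU: "al1 * (2*U^2 + (2*al1+be1)*U) \<ge> (2*al2+be2)*be2^2"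
    and cV1: "al2 * (2*V1 + U) \<le> be1^2"
    and cV2: "al1 * (2*V2 + L) \<ge> be2^2"
  shows "L \<le> fst (F p) \<and> fst (F p) \<le> U \<and> V1 \<le> snd (F p) \<and> snd (F p) \<le> V2"
  using step_encl[of al1 "fst p" al2 be1 "snd p" be2 L U V1 V2] e h cL cU cV1 cV2 by simp


definition qq :: real where "qq = 10 ^ 60"
lemma qq_pos: "qq > 0" by (simp add: qq_def)

lemma hom3: fixes Q :: real assumes "Q > 0"
  shows "(x/Q) * (2*(y/Q)^2 + (2*(x/Q)+(z/Q))*(y/Q)) = (x * (2*y^2 + (2*x+z)*y)) / Q^3"
    and "(2*(x/Q)+(z/Q))*(z/Q)^2 = ((2*x+z)*z^2) / Q^3"
    and "(x/Q) * (2*(y/Q) + (z/Q)) = (x * (2*y + z)) / Q^2"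
  using assms by (simp_all add: power2_eq_square power3_eq_cube field_simps)

lemma step_int:
  fixes p :: "real \<times> real" and Q A1 A2 B1 B2 L U V1 V2 :: real
  assumes Q: "0 < Q"
    and e: "A1/Q \<le> fst p \<and> fst p \<le> A2/Q \<and> B1/Q \<le> snd p \<and> snd p \<le> B2/Q"
    and h: "0 < A1" "0 < B1" "0 \<le> L" "0 < U"
    and cL: "A2 * (2*L^2 + (2*A2+B2)*L) \<le> (2*A1+B1)*B1^2"
    and cU: "A1 * (2*U^2 + (2*A1+B1)*U) \<ge> (2*A2+B2)*B2^2"
    and cV1: "A2 * (2*V1 + U) \<le> B1^2"
    and cV2: "A1 * (2*V2 + L) \<ge> B2^2"
  shows "L/Q \<le> fst (F p) \<and> fst (F p) \<le> U/Q \<and> V1/Q \<le> snd (F p) \<and> snd (F p) \<le> V2/Q"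
proof (rule step_encl'[OF e])
  show "0 < A1/Q" "0 < B1/Q" "0 \<le> L/Q" "0 < U/Q" using h Q by auto
  have Q3: "Q^3 > 0" and Q2: "Q^2 > 0" using Q by auto
  show "A2/Q * (2*(L/Q)^2 + (2*(A2/Q)+B2/Q)*(L/Q)) \<le> (2*(A1/Q)+B1/Q)*(B1/Q)^2"
    unfolding hom3[OF Q] using cL Q3 by (simp add: divide_right_mono)
  show "A1/Q * (2*(U/Q)^2 + (2*(A1/Q)+B1/Q)*(U/Q)) \<ge> (2*(A2/Q)+B2/Q)*(B2/Q)^2"
    unfolding hom3[OF Q] using cU Q3 by (simp add: divide_right_mono)
  show "A2/Q * (2*(V1/Q) + U/Q) \<le> (B1/Q)^2"
    unfolding hom3[OF Q] power_divide using cV1 Q2 by (simp add: divide_right_mono)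
  show "A1/Q * (2*(V2/Q) + L/Q) \<ge> (B2/Q)^2"
    unfolding hom3[OF Q] power_divide using cV2 Q2 by (simp add: divide_right_mono)
qed

definition rs :: real where "rs = 2.906"

lemma pB_0: "pB r 0 = F (1, r)" by (simp add: pB_def)
lemma pF_1: "pF r 1 = F (pF r 0)" and pF_2: "pF r 2 = F (pF r 1)" and pF_3: "pF r 3 = F (pF r 2)"
  by (simp_all add: pF_def numeral_eq_Suc)
lemma pB_1: "pB r 1 = F (pB r 0)" and pB_2: "pB r 2 = F (pB r 1)" and pB_3: "pB r 3 = F (pB r 2)"
  and pB_4: "pB r 4 = F (pB r 3)"
  by (simp_all add: pB_def numeral_eq_Suc)


lemma encF0: "2906000000000000000000000000000000000000000000000000000000000/qq \<le> fst (pF rs 0) \<and> fst (pF rs 0) \<le> 2906000000000000000000000000000000000000000000000000000000000/qq \<and> 1000000000000000000000000000000000000000000000000000000000000/qq \<le> snd (pF rs 0) \<and> snd (pF rs 0) \<le> 1000000000000000000000000000000000000000000000000000000000000/qq" by (simp add: pF_def rs_def qq_def)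

lemma encF1: "314985830332968090882268610621242000000000000000000000000000/qq \<le> fst (pF rs 1) \<and> fst (pF rs 1) \<le> 314985830332968090882268610747238000000000000000000000000000/qq \<and> 14564896258154633154873953398416400000000000000000000000000/qq \<le> snd (pF rs 1) \<and> snd (pF rs 1) \<le> 14564896258154633154873953467240400000000000000000000000000/qq"
  unfolding pF_1 by (rule step_int[OF qq_pos encF0]) simp_all

lemma encF2: "672076970342379099375039846873097000000000000000000000000/qq \<le> fst (pF rs 2) \<and> fst (pF rs 2) \<le> 672076970342379099375039860449052000000000000000000000000/qq \<and> 700794158550401399498321199391680000000000000000000000/qq \<le> snd (pF rs 2) \<and> snd (pF rs 2) \<le> 700794158550401399498331318633872000000000000000000000/qq"
  unfolding pF_2 by (rule step_int[OF qq_pos encF1]) simp_all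

lemma encF3: "730737609873722036169849032697598000000000000000000/qq \<le> fst (pF rs 3) \<and> fst (pF rs 3) \<le> 730737609873722036169995180365722000000000000000000/qq \<and> 397052142993105188352082640910540000000000000/qq \<le> snd (pF rs 3) \<and> snd (pF rs 3) \<le> 397052142993105271985004033805651000000000000/qq"
  unfolding pF_3 by (rule step_int[OF qq_pos encF2]) simp_all

lemma encB_start: "1000000000000000000000000000000000000000000000000000000000000/qq \<le> fst ((1::real, rs)) \<and> fst ((1::real, rs)) \<le> 1000000000000000000000000000000000000000000000000000000000000/qq \<and> 2906000000000000000000000000000000000000000000000000000000000/qq \<le> snd ((1::real, rs)) \<and> snd ((1::real, rs)) \<le> 2906000000000000000000000000000000000000000000000000000000000/qq" by (simp add: rs_def qq_def)

lemma encB0: "3487254868255242650850427207939780000000000000000000000000000/qq \<le> fst (pB rs 0) \<and> fst (pB rs 0) \<le> 3487254868255242650850427209334690000000000000000000000000000/qq \<and> 2478790565872378674574786394836890000000000000000000000000000/qq \<le> snd (pB rs 0) \<and> snd (pB rs 0) \<le> 2478790565872378674574786396525870000000000000000000000000000/qq"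
  unfolding pB_0 by (rule step_int[OF qq_pos encB_start]) simp_all

lemma encB1: "1366751688866398848767418768607840000000000000000000000000000/qq \<le> fst (pB rs 1) \<and> fst (pB rs 1) \<le> 1366751688866398848767418771614700000000000000000000000000000/qq \<and> 197604023914091675757608196243368000000000000000000000000000/qq \<le> snd (pB rs 1) \<and> snd (pB rs 1) \<le> 197604023914091675757608199734473000000000000000000000000000/qq"
  unfolding pB_1 by (rule step_int[OF qq_pos encB0]) simp_all

lemma encB2: "28033232563788286717307253584657700000000000000000000000000/qq \<le> fst (pB rs 2) \<and> fst (pB rs 2) \<le> 28033232563788286717307259196911000000000000000000000000000/qq \<and> 268110997070216822071081596155890000000000000000000000000/qq \<le> snd (pB rs 2) \<and> snd (pB rs 2) \<le> 268110997070216822071084992126401000000000000000000000000/qq"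
  unfolding pB_2 by (rule step_int[OF qq_pos encB1]) simp_all

lemma encB3: "2563991285084750307908089439189060000000000000000000000/qq \<le> fst (pB rs 3) \<and> fst (pB rs 3) \<le> 2563991285084750307908602237958880000000000000000000000/qq \<and> 116696561192627020605687052152360000000000000000000/qq \<le> snd (pB rs 3) \<and> snd (pB rs 3) \<le> 116696561192627020894845657885855000000000000000000/qq"
  unfolding pB_3 by (rule step_int[OF qq_pos encB2]) simp_all

lemma encB4: "5311284576197499732212945692781460000000000000/qq \<le> fst (pB rs 4) \<and> fst (pB rs 4) \<le> 5311284576197499838438637217793720000000000000/qq \<and> 5501013574842134021447140764121360000/qq \<le> snd (pB rs 4) \<and> snd (pB rs 4) \<le> 5501013641116170002051205429543490000/qq"
  unfolding pB_4 by (rule step_int[OF qq_pos encB3]) simp_all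


lemma rsD: "rs \<in> {1..r1}"
proof -
  have "rs^2 \<le> 3 * rs + 6" by (simp add: rs_def power2_eq_square)
  moreover have "1 \<le> rs" by (simp add: rs_def)
  ultimately show ?thesis using D_iff by auto
qed

lemma tail_sum:
  assumes q: "pos q" and le: "snd q \<le> fst q"
  shows "summable (\<lambda>j. fst ((F ^^ j) q)) \<and> summable (\<lambda>j. snd ((F ^^ j) q)) \<and>
         suminf (\<lambda>j. fst ((F ^^ j) q)) \<le> 16/3 * fst q \<and> suminf (\<lambda>j. snd ((F ^^ j) q)) \<le> 16/3 * fst q"
proof -
  define g where "g j = 4 * fst q * (1/4::real)^j" for j
  have sg: "g sums (16/3 * fst q)"
  proof -
    have "(\<lambda>j. (1/4::real)^j) sums (1 / (1 - 1/4))" by (rule geometric_sums) simp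
    then have "(\<lambda>j. 4 * fst q * (1/4::real)^j) sums (4 * fst q * (1 / (1 - 1/4)))" by (rule sums_mult)
    moreover have "g = (\<lambda>j. 4 * fst q * (1/4::real)^j)" by (rule ext) (simp add: g_def)
    ultimately show ?thesis by simp
  qed
  have b: "fst ((F ^^ j) q) \<le> g j" "snd ((F ^^ j) q) \<le> g j" for j
    using tail_bound[OF q le, of j] by (auto simp: g_def)
  have p: "fst ((F ^^ j) q) > 0" "snd ((F ^^ j) q) > 0" for j using pos_Fn[OF q, of j] by (auto simp: pos_def)
  have s1: "summable (\<lambda>j. fst ((F ^^ j) q))"
    by (rule summable_comparison_test'[OF sums_summable[OF sg], of 0]) (use b p in \<open>auto simp: abs_of_pos\<close>)
  have s2: "summable (\<lambda>j. snd ((F ^^ j) q))"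
    by (rule summable_comparison_test'[OF sums_summable[OF sg], of 0]) (use b p in \<open>auto simp: abs_of_pos\<close>)
  have "suminf (\<lambda>j. fst ((F ^^ j) q)) \<le> suminf g" by (rule suminf_le) (use b s1 sums_summable[OF sg] in auto)
  moreover have "suminf (\<lambda>j. snd ((F ^^ j) q)) \<le> suminf g" by (rule suminf_le) (use b s2 sums_summable[OF sg] in auto)
  ultimately show ?thesis using s1 s2 sums_unique[OF sg] by simp
qed

lemma sum3: "(\<Sum>k<3. f k) = f 0 + f 1 + f (2::nat) + (0::real)" by (simp add: numeral_eq_Suc)
lemma sum4: "(\<Sum>k<4. f k) = f 0 + f 1 + f 2 + f (3::nat) + (0::real)" by (simp add: numeral_eq_Suc)
lemma sum5: "(\<Sum>k<5. f k) = f 0 + f 1 + f 2 + f 3 + f (4::nat) + (0::real)" by (simp add: numeral_eq_Suc)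

lemma numeric: "G rs \<le> 0.999904"
proof -
  note D = rsD
  note s = sums_D[OF D]
  have nnF: "fst (pF rs k) \<ge> 0" "snd (pF rs k) \<ge> 0" for k using pF_bound(1)[OF D, of k] by (auto simp: pos_def)
  have nnB: "fst (pB rs k) \<ge> 0" "snd (pB rs k) \<ge> 0" for k using pB_bound(1)[OF D, of k] by (auto simp: pos_def)
  have A1: "(\<Sum>k<4. fst (pF rs k)) \<le> suminf (\<lambda>k. fst (pF rs k))" by (rule sum_le_suminf) (use s nnF in auto)
  have A2: "(\<Sum>k<5. snd (pB rs k)) \<le> suminf (\<lambda>k. snd (pB rs k))" by (rule sum_le_suminf) (use s nnB in auto)
  have eF: "pF rs (j + 3) = (F ^^ j) (pF rs 3)" for j by (simp add: pF_def funpow_add)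
  have eB: "pB rs (j + 4) = (F ^^ j) (pB rs 4)" for j by (simp add: pB_def funpow_add)
  have tF: "suminf (\<lambda>j. snd (pF rs (j + 3))) \<le> 16/3 * fst (pF rs 3)"
    unfolding eF using tail_sum[OF pF_bound(1)[OF D] pF_bound(3)[OF D]] by blast
  have tB: "suminf (\<lambda>j. fst (pB rs (j + 4))) \<le> 16/3 * fst (pB rs 4)"
    unfolding eB using tail_sum[OF pB_bound(1)[OF D] pB_bound(3)[OF D]] by blast
  have B1: "suminf (\<lambda>k. snd (pF rs k)) = suminf (\<lambda>j. snd (pF rs (j + 3))) + (\<Sum>k<3. snd (pF rs k))"
    by (rule suminf_split_initial_segment) (use s in auto)
  have B2: "suminf (\<lambda>k. fst (pB rs k)) = suminf (\<lambda>j. fst (pB rs (j + 4))) + (\<Sum>k<4. fst (pB rs k))"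
    by (rule suminf_split_initial_segment) (use s in auto)
  define A where "A = Aval rs"
  define B where "B = Bval rs"
  have Alo: "A \<ge> (\<Sum>k<4. fst (pF rs k)) + (\<Sum>k<5. snd (pB rs k))"
    unfolding A_def Aval_def using A1 A2 by simp
  have Bhi: "B \<le> (\<Sum>k<3. snd (pF rs k)) + 16/3 * fst (pF rs 3) + (\<Sum>k<4. fst (pB rs k)) + 16/3 * fst (pB rs 4)"
    unfolding B_def Bval_def using B1 B2 tF tB by simp
  note e = encF0 encF1 encF2 encF3 encB0 encB1 encB2 encB3 encB4
  have Alo2: "A \<ge> 2906000000000000000000000000000000000000000000000000000000000/qq + 314985830332968090882268610621242000000000000000000000000000/qq + 672076970342379099375039846873097000000000000000000000000/qq + 730737609873722036169849032697598000000000000000000/qq + 2478790565872378674574786394836890000000000000000000000000000/qq + 197604023914091675757608196243368000000000000000000000000000/qq + 268110997070216822071081596155890000000000000000000000000/qq + 116696561192627020605687052152360000000000000000000/qq + 5501013574842134021447140764121360000/qq" using Alo[unfolded sum4 sum5] e by (elim conjE) linarith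
  have Bhi2: "B \<le> 1000000000000000000000000000000000000000000000000000000000000/qq + 14564896258154633154873953467240400000000000000000000000000/qq + 700794158550401399498331318633872000000000000000000000/qq + 16/3 * (730737609873722036169995180365722000000000000000000/qq) + 3487254868255242650850427209334690000000000000000000000000000/qq + 1366751688866398848767418771614700000000000000000000000000000/qq + 28033232563788286717307259196911000000000000000000000000000/qq + 2563991285084750307908602237958880000000000000000000000/qq + 16/3 * (5311284576197499838438637217793720000000000000/qq)" using Bhi[unfolded sum3 sum4] e by (elim conjE) linarith
  have qq: "qq > 0" by (rule qq_pos)
  have Alo3: "qq * A \<ge> 5898320608934285208202463880933639913983979447140764121360000"
  proof -
    have "qq * A \<ge> qq * (2906000000000000000000000000000000000000000000000000000000000/qq + 314985830332968090882268610621242000000000000000000000000000/qq + 672076970342379099375039846873097000000000000000000000000/qq + 730737609873722036169849032697598000000000000000000/qq + 2478790565872378674574786394836890000000000000000000000000000/qq + 197604023914091675757608196243368000000000000000000000000000/qq + 268110997070216822071081596155890000000000000000000000000/qq + 116696561192627020605687052152360000000000000000000/qq + 5501013574842134021447140764121360000/qq)" using Alo2 qq by (intro mult_left_mono) auto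
    also have "qq * (2906000000000000000000000000000000000000000000000000000000000/qq + 314985830332968090882268610621242000000000000000000000000000/qq + 672076970342379099375039846873097000000000000000000000000/qq + 730737609873722036169849032697598000000000000000000/qq + 2478790565872378674574786394836890000000000000000000000000000/qq + 197604023914091675757608196243368000000000000000000000000000/qq + 268110997070216822071081596155890000000000000000000000000/qq + 116696561192627020605687052152360000000000000000000/qq + 5501013574842134021447140764121360000/qq) = 5898320608934285208202463880933639913983979447140764121360000" using qq by (simp add: algebra_simps)
    finally show ?thesis .
  qed
  have Bhi3: "qq * B \<le> 5896607950729028054641734600547097992752000000000000000000000 + 16/3 * 730737609873722036169995180365722000000000000000000 + 16/3 * 5311284576197499838438637217793720000000000000"
  proof -
    have "qq * B \<le> qq * (1000000000000000000000000000000000000000000000000000000000000/qq + 14564896258154633154873953467240400000000000000000000000000/qq + 700794158550401399498331318633872000000000000000000000/qq + 16/3 * (730737609873722036169995180365722000000000000000000/qq) + 3487254868255242650850427209334690000000000000000000000000000/qq + 1366751688866398848767418771614700000000000000000000000000000/qq + 28033232563788286717307259196911000000000000000000000000000/qq + 2563991285084750307908602237958880000000000000000000000/qq + 16/3 * (5311284576197499838438637217793720000000000000/qq))" using Bhi2 qq by (intro mult_left_mono) auto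
    also have "qq * (1000000000000000000000000000000000000000000000000000000000000/qq + 14564896258154633154873953467240400000000000000000000000000/qq + 700794158550401399498331318633872000000000000000000000/qq + 16/3 * (730737609873722036169995180365722000000000000000000/qq) + 3487254868255242650850427209334690000000000000000000000000000/qq + 1366751688866398848767418771614700000000000000000000000000000/qq + 28033232563788286717307259196911000000000000000000000000000/qq + 2563991285084750307908602237958880000000000000000000000/qq + 16/3 * (5311284576197499838438637217793720000000000000/qq)) = 5896607950729028054641734600547097992752000000000000000000000 + 16/3 * 730737609873722036169995180365722000000000000000000 + 16/3 * 5311284576197499838438637217793720000000000000" using qq by (simp add: algebra_simps)
    finally show ?thesis .
  qed
  have num: "1000096 * (5896607950729028054641734600547097992752000000000000000000000 + 16/3 * 730737609873722036169995180365722000000000000000000 + 16/3 * 5311284576197499838438637217793720000000000000) \<le> 999808 * (5898320608934285208202463880933639913983979447140764121360000::real)" by simp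
  have ApB: "A > 0" "B > 0" using AB_pos[OF D] by (simp_all add: A_def B_def)
  have "qq * (1000096 * B) \<le> qq * (999808 * A)" using Alo3 Bhi3 num by (simp add: algebra_simps)
  then have "1000096 * B \<le> 999808 * A" using qq by simp
  then have "A + 2 * B \<le> 0.999904 * (2 * A + B)" by simp
  then show ?thesis unfolding G_def A_def[symmetric] B_def[symmetric] using ApB by (simp add: divide_le_eq)
qed


theorem mainTheorem2:
  shows "\<exists>lam::real. 0 < lam \<and> lam \<le> 1 \<and>
           mina_margins = {lam .. 1 / lam} \<and>
           (\<forall>mL mR nL nR.
              (\<exists>a b m n. positive_ABMN_solution a b m n \<and> has_boundary_data m n mL mR nL nR)
              \<longleftrightarrow> (mL < mR \<and> nR < nL \<and> mina_margin mL mR nL nR \<in> {lam .. 1 / lam})) \<and>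
           lam \<le> 0.999904"
    by (rule main_core) (use rsD numeric in blast)

end
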